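(* Let $\zeta(t)$ be the KMP process with boundary temperatures $T_{\partial\mathbb V}$ described in the context. (1) If the law of $\zeta(0)$ belongs to $\mathcal M$ with parameter measure $\nu$ (supported on $\{s: s_j=T_j\ \forall j\in\partial\mathbb V\}$), then for every $t\ge0$ the law $\mu^\zeta_t$ of $\zeta(t)$ belongs to $\mathcal M$ with parameter measure $\nu_t:=\nu e^{tL^O}$, the law at time $t$ of the opinion process started from $\nu$. (2) The invariant measure of the KMP process with boundary temperatures $T_{\partial\mathbb V}$ is the element of $\mathcal M$ with parameter measure $\nu^O$: $\mu^\zeta(d\underline\zeta)=\int\nu^O(d\underline s)\prod_{i\in\overline{\mathbb V}}\frac1{s_i}e^{-\zeta_i/s_i}d\zeta_i$. (3) For all $t\ge0$ and all $k_i\in\{0,1,2,\dots\}$, $\int\mu^\zeta_t(d\underline\zeta)\prod_{i\in\overline{\mathbb V}}\zeta_i^{k_i}=\int\nu_t(d\underline s)\prod_{i\in\overline{\mathbb V}}k_i!\,s_i^{k_i}$, and $\int\mu^\zeta(d\underline\zeta)\prod_{i\in\overline{\mathbb V}}\zeta_i^{k_i}=\int\nu^O(d\underline s)\prod_{i\in\overline{\mathbb V}}k_i!\,s_i^{k_i}$.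
   Context: Graph: $(\overline{\mathbb V},\overline E)$ is a finite oriented graph; $\overline{\mathbb V}=\mathbb V\cup\partial\mathbb V$ (disjoint; internal and boundary vertices). There is at most one edge between any pair of vertices and if $ij\in\overline E$ then $ji\notin\overline E$. $E$ is the set of edges with both endpoints in $\mathbb V$, $\partial E$ the set of edges with one endpoint in $\partial\mathbb V$; there are no edges between two boundary vertices, and every boundary edge is written $ij$ with $i\in\mathbb V$, $j\in\partial\mathbb V$. $\overline E=E\cup\partial E$. Each $j\in\partial\mathbb V$ carries a fixed temperature $T_j>0$. KMP process with boundary temperatures $T_{\partial\mathbb V}$: Markov process on $\mathbb R_+^{\overline{\mathbb V}}$ with generator $L^\zeta f(\zeta)=\sum_{ij\in E}\int_0^1du\,[f(H^\zeta_{ij;u}\zeta)-f(\zeta)]+\sum_{ij\in\partial E}\int_0^1du\int_0^\infty db\,e^{-b}[f(H^\zeta_{ij;u,b}\zeta)-f(\zeta)]$, where $(H^\zeta_{ij;u}\zeta)_i=u(\zeta_i+\zeta_j)$, $(H^\zeta_{ij;u}\zeta)_j=(1-u)(\zeta_i+\zeta_j)$, $(H^\zeta_{ij;u,b}\zeta)_i=u(\zeta_i+\zeta_j)$, $(H^\zeta_{ij;u,b}\zeta)_j=bT_j$, all other coordinates unchanged. Opinion process $O$ with boundary conditions $T_{\partial\mathbb V}$: Markov process on $\mathbb R_+^{\overline{\mathbb V}}$ with $O_j\equiv T_j$ for $j\in\partial\mathbb V$ and generator $L^Of(O)=\sum_{ij\in\overline E}\int_0^1dv\,[f(H^O_{ij;v}O)-f(O)]$,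 where $(H^O_{ij;v}O)_\ell=vO_i+(1-v)O_j$ for $\ell\in\{i,j\}\cap\mathbb V$ and $(H^O_{ij;v}O)_\ell=O_\ell$ otherwise. The paper asserts that this process has a unique invariant probability measure, denoted $\nu^O$. $\mathcal M$: the set of probability measures $\mu$ on $\mathbb R_+^{\overline{\mathbb V}}$ of the form $\mu(d\underline\zeta)=\int\nu(d\underline s)\prod_{i\in\overline{\mathbb V}}\frac1{s_i}e^{-\zeta_i/s_i}d\zeta_i$ for some probability measure $\nu$ on $\mathbb R_+^{\overline{\mathbb V}}$, called the parameter measure of $\mu$ (mixtures of products of independent exponentials with means $s_i$). *)

theory Defs
  imports "HOL-Probability.Probability"
begin

text \<open>V = internal vertices, B = boundary vertices, the full
vertex set is V \<union> B, Eb = set of oriented edges (pairs). Configurations are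
extensional functions on V \<union> B (the measurable space stsp (V \<union> B)).\<close>

definition stsp :: "'v set \<Rightarrow> ('v \<Rightarrow> real) measure" where
  "stsp W = PiM W (\<lambda>_. borel)"

definition unif01 :: "real measure" where
  "unif01 = uniform_measure lborel {0..1}"

definition exp1 :: "real measure" where
  "exp1 = density lborel (\<lambda>b. ennreal (exponential_density 1 b))"

text \<open>Exponential law with mean s (density (1/s) e^{-x/s}); degenerate convention: mean 0 gives the Dirac mass at 0.\<close>
definition exp_mean :: "real \<Rightarrow> real measure" where
  "exp_mean s = (if s \<le> 0 then return borel 0
                 else density lborel (\<lambda>x. ennreal (exponential_density (1 / s) x)))"

definition exp_mixture :: "'v set \<Rightarrow> ('v \<Rightarrow> real) measure \<Rightarrow> ('v \<Rightarrow> real) measure" where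
  "exp_mixture W \<nu> = \<nu> \<bind> (\<lambda>s. PiM W (\<lambda>i. exp_mean (s i)))"

definition kmp_edge_step ::
  "'v set \<Rightarrow> 'v set \<Rightarrow> ('v \<Rightarrow> real) \<Rightarrow> 'v \<Rightarrow> 'v \<Rightarrow> ('v \<Rightarrow> real) measure \<Rightarrow> ('v \<Rightarrow> real) measure" where
  "kmp_edge_step V B T i j \<mu> =
     (if j \<in> B then
        distr ((\<mu> \<Otimes>\<^sub>M unif01) \<Otimes>\<^sub>M exp1) (stsp (V \<union> B))
          (\<lambda>((\<zeta>, u), b). \<zeta>(i := u * (\<zeta> i + \<zeta> j), j := b * T j))
      else
        distr (\<mu> \<Otimes>\<^sub>M unif01) (stsp (V \<union> B))
          (\<lambda>(\<zeta>, u). \<zeta>(i := u * (\<zeta> i + \<zeta> j), j := (1 - u) * (\<zeta> i + \<zeta> j))))"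

definition op_edge_step ::
  "'v set \<Rightarrow> 'v set \<Rightarrow> 'v \<Rightarrow> 'v \<Rightarrow> ('v \<Rightarrow> real) measure \<Rightarrow> ('v \<Rightarrow> real) measure" where
  "op_edge_step V B i j \<mu> =
     distr (\<mu> \<Otimes>\<^sub>M unif01) (stsp (V \<union> B))
       (\<lambda>(x, v). (\<lambda>l. if l \<in> {i, j} \<inter> V then v * x i + (1 - v) * x j else x l))"

text \<open>Uniformly averaged jump kernel (the generator is card Eb times (K - Id)).\<close>
definition kmp_step ::
  "'v set \<Rightarrow> 'v set \<Rightarrow> ('v \<times> 'v) set \<Rightarrow> ('v \<Rightarrow> real) \<Rightarrow> ('v \<Rightarrow> real) measure \<Rightarrow> ('v \<Rightarrow> real) measure" where
  "kmp_step V B Eb T \<mu> = measure_pmf (pmf_of_set Eb) \<bind> (\<lambda>(i, j). kmp_edge_step V B T i j \<mu>)"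

definition op_step ::
  "'v set \<Rightarrow> 'v set \<Rightarrow> ('v \<times> 'v) set \<Rightarrow> ('v \<Rightarrow> real) measure \<Rightarrow> ('v \<Rightarrow> real) measure" where
  "op_step V B Eb \<mu> = measure_pmf (pmf_of_set Eb) \<bind> (\<lambda>(i, j). op_edge_step V B i j \<mu>)"

text \<open>Semigroup of the pure jump process with bounded generator r (K - Id), acting on
laws: mu e^{tL} = sum_n Poisson(r t)(n) mu K^n (uniformization).\<close>
definition unif_sg :: "real \<Rightarrow> ('a measure \<Rightarrow> 'a measure) \<Rightarrow> real \<Rightarrow> 'a measure \<Rightarrow> 'a measure" where
  "unif_sg r K t \<mu> = (if r * t \<le> 0 then \<mu>
      else measure_pmf (poisson_pmf (r * t)) \<bind> (\<lambda>n. (K ^^ n) \<mu>))"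

definition kmp_law ::
  "'v set \<Rightarrow> 'v set \<Rightarrow> ('v \<times> 'v) set \<Rightarrow> ('v \<Rightarrow> real) \<Rightarrow> real \<Rightarrow> ('v \<Rightarrow> real) measure \<Rightarrow> ('v \<Rightarrow> real) measure" where
  "kmp_law V B Eb T t \<mu> = unif_sg (real (card Eb)) (kmp_step V B Eb T) t \<mu>"

definition op_law ::
  "'v set \<Rightarrow> 'v set \<Rightarrow> ('v \<times> 'v) set \<Rightarrow> real \<Rightarrow> ('v \<Rightarrow> real) measure \<Rightarrow> ('v \<Rightarrow> real) measure" where
  "op_law V B Eb t \<mu> = unif_sg (real (card Eb)) (op_step V B Eb) t \<mu>"

definition admissible_param ::
  "'v set \<Rightarrow> 'v set \<Rightarrow> ('v \<Rightarrow> real) \<Rightarrow> ('v \<Rightarrow> real) measure \<Rightarrow> bool" where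
  "admissible_param V B T \<nu> \<longleftrightarrow> prob_space \<nu> \<and> sets \<nu> = sets (stsp (V \<union> B)) \<and>
     (AE s in \<nu>. (\<forall>i\<in>V. 0 \<le> s i) \<and> (\<forall>j\<in>B. s j = T j))"

end

theory Submission
  imports Defs
begin

definition pos :: "real \<Rightarrow> real" where "pos x = max x 0"

lemma sets_exp1[simp, measurable_cong]: "sets exp1 = sets borel"
  by (simp add: exp1_def)
lemma sets_unif01[simp, measurable_cong]: "sets unif01 = sets borel"
  by (simp add: unif01_def)
lemma space_exp1[simp]: "space exp1 = UNIV"
  by (simp add: exp1_def)
lemma space_unif01[simp]: "space unif01 = UNIV"
  by (simp add: unif01_def)

lemma prob_exp1: "prob_space exp1"
proof -
  have "prob_space (density lborel (exponential_density 1))"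
    using prob_space_exponential_density[of 1] by simp
  then show ?thesis unfolding exp1_def by simp
qed

lemma prob_unif01: "prob_space unif01"
  unfolding unif01_def by (rule prob_space_uniform_measure) auto

lemma emeasure_exp1_UNIV[simp]: "emeasure exp1 UNIV = 1"
  using prob_space.emeasure_space_1[OF prob_exp1] by simp
lemma emeasure_unif01_UNIV[simp]: "emeasure unif01 UNIV = 1"
  using prob_space.emeasure_space_1[OF prob_unif01] by simp

lemma nn_exp1:
  assumes [measurable]: "f \<in> borel_measurable borel"
  shows "(\<integral>\<^sup>+x. f x \<partial>exp1) = (\<integral>\<^sup>+x. ennreal (exp (-x)) * indicator {0..} x * f x \<partial>lborel)"
  unfolding exp1_def
  by (subst nn_integral_density) (auto intro!: nn_integral_cong simp: exponential_density_def split: split_indicator)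

lemma nn_unif01:
  assumes [measurable]: "f \<in> borel_measurable borel"
  shows "(\<integral>\<^sup>+x. f x \<partial>unif01) = (\<integral>\<^sup>+x. indicator {0..1} x * f x \<partial>lborel)"
  unfolding unif01_def
  by (subst nn_integral_uniform_measure) (auto simp: mult.commute divide_ennreal_def)

lemma sf_unif01: "sigma_finite_measure unif01"
  using prob_unif01 prob_space_imp_sigma_finite by blast
lemma sf_exp1: "sigma_finite_measure exp1"
  using prob_exp1 prob_space_imp_sigma_finite by blast

lemma meas_pos[measurable]: "pos \<in> borel_measurable borel"
  unfolding pos_def by measurable

lemma pos_nonneg[simp]: "0 \<le> x \<Longrightarrow> pos x = x"
  by (simp add: pos_def)

lemma lborel_pair: "pair_sigma_finite lborel lborel"
  by (simp add: lborel.sigma_finite_measure_axioms pair_sigma_finite_def)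

lemma meas_k2:
  fixes k :: "real \<Rightarrow> real \<Rightarrow> ennreal"
  assumes "case_prod k \<in> borel_measurable (borel \<Otimes>\<^sub>M borel)"
    and "f \<in> borel_measurable M" "g \<in> borel_measurable M"
  shows "(\<lambda>x. k (f x) (g x)) \<in> borel_measurable M"
  using measurable_compose[OF measurable_Pair[OF assms(2,3)] assms(1)] by simp

lemma polarA:
  fixes k :: "real \<Rightarrow> real \<Rightarrow> ennreal"
  assumes k[measurable]: "case_prod k \<in> borel_measurable (borel \<Otimes>\<^sub>M borel)"
  shows "(\<integral>\<^sup>+x. \<integral>\<^sup>+y. ennreal (exp (-x)) * indicator {0..} x * (ennreal (exp (-y)) * indicator {0..} y * k x y) \<partial>lborel \<partial>lborel)
       = (\<integral>\<^sup>+g. \<integral>\<^sup>+w. ennreal (g * exp (-g)) * indicator {0..} g * (indicator {0..1} w * k (g*w) (g*(1-w))) \<partial>lborel \<partial>lborel)"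
proof -
  note kk[measurable] = meas_k2[OF k]
  have "(\<integral>\<^sup>+x. \<integral>\<^sup>+y. ennreal (exp (-x)) * indicator {0..} x * (ennreal (exp (-y)) * indicator {0..} y * k x y) \<partial>lborel \<partial>lborel)
     = (\<integral>\<^sup>+x. \<integral>\<^sup>+g. ennreal (exp (-x)) * indicator {0..} x * (ennreal (exp (-(-x+1*g))) * indicator {0..} (-x+1*g) * k x (-x+1*g)) \<partial>lborel \<partial>lborel)"
  proof (rule nn_integral_cong)
    fix x :: real
    show "(\<integral>\<^sup>+y. ennreal (exp (-x)) * indicator {0..} x * (ennreal (exp (-y)) * indicator {0..} y * k x y) \<partial>lborel)
      = (\<integral>\<^sup>+g. ennreal (exp (-x)) * indicator {0..} x * (ennreal (exp (-(-x+1*g))) * indicator {0..} (-x+1*g) * k x (-x+1*g)) \<partial>lborel)"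
      using nn_integral_real_affine[where c=1 and t="-x" and f="\<lambda>y. ennreal (exp (-x)) * indicator {0..} x * (ennreal (exp (-y)) * indicator {0..} y * k x y)"]
      by simp
  qed
  also have "\<dots> = (\<integral>\<^sup>+x. \<integral>\<^sup>+g. ennreal (exp (-g)) * indicator {0..} x * indicator {0..} (g - x) * k x (g - x) \<partial>lborel \<partial>lborel)"
  proof (intro nn_integral_cong)
    fix x g :: real
    have h: "ennreal (exp (-x)) * ennreal (exp (x - g)) = ennreal (exp (-g))"
      by (simp flip: ennreal_mult add: exp_add[symmetric])
    then show "ennreal (exp (-x)) * indicator {0..} x * (ennreal (exp (-(-x+1*g))) * indicator {0..} (-x+1*g) * k x (-x+1*g)) =
          ennreal (exp (-g)) * indicator {0..} x * indicator {0..} (g - x) * k x (g - x)"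
      using h by (auto simp: mult.assoc[symmetric] split: split_indicator)
  qed
  also have "\<dots> = (\<integral>\<^sup>+g. \<integral>\<^sup>+x. ennreal (exp (-g)) * indicator {0..} x * indicator {0..} (g - x) * k x (g - x) \<partial>lborel \<partial>lborel)"
    by (rule pair_sigma_finite.Fubini'[OF lborel_pair, symmetric]) measurable
  also have "\<dots> = (\<integral>\<^sup>+g. \<integral>\<^sup>+w. ennreal (g * exp (-g)) * indicator {0..} g * (indicator {0..1} w * k (g*w) (g*(1-w))) \<partial>lborel \<partial>lborel)"
  proof (rule nn_integral_cong_AE)
    have "AE g in lborel. g \<noteq> 0" by (rule AE_lborel_singleton)
    then show "AE g in lborel. (\<integral>\<^sup>+x. ennreal (exp (-g)) * indicator {0..} x * indicator {0..} (g - x) * k x (g - x) \<partial>lborel)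
        = (\<integral>\<^sup>+w. ennreal (g * exp (-g)) * indicator {0..} g * (indicator {0..1} w * k (g*w) (g*(1-w))) \<partial>lborel)"
    proof eventually_elim
      case (elim g)
      show ?case
      proof (cases "g > 0")
        case True
        have "(\<integral>\<^sup>+x. ennreal (exp (-g)) * indicator {0..} x * indicator {0..} (g - x) * k x (g - x) \<partial>lborel)
          = ennreal \<bar>g\<bar> * (\<integral>\<^sup>+w. ennreal (exp (-g)) * indicator {0..} (0 + g*w) * indicator {0..} (g - (0 + g*w)) * k (0+g*w) (g - (0+g*w)) \<partial>lborel)"
          using True by (subst nn_integral_real_affine[where c=g and t=0]) auto
        also have "\<dots> = (\<integral>\<^sup>+w. ennreal \<bar>g\<bar> * (ennreal (exp (-g)) * indicator {0..} (0 + g*w) * indicator {0..} (g - (0 + g*w)) * k (0+g*w) (g - (0+g*w))) \<partial>lborel)"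
          by (rule nn_integral_cmult[symmetric]) measurable
        also have "\<dots> = (\<integral>\<^sup>+w. ennreal (g * exp (-g)) * indicator {0..} g * (indicator {0..1} w * k (g*w) (g*(1-w))) \<partial>lborel)"
        proof (intro nn_integral_cong)
          fix w :: real
          have a: "(0 \<le> g*w) = (0 \<le> w)" "(0 \<le> g*(1-w)) = (w \<le> 1)" using True
            by (simp_all add: zero_le_mult_iff mult_le_cancel_left1)
          have b: "g - g*w = g*(1-w)" by (simp add: algebra_simps)
          show "ennreal \<bar>g\<bar> * (ennreal (exp (-g)) * indicator {0..} (0 + g*w) * indicator {0..} (g - (0 + g*w)) * k (0+g*w) (g - (0+g*w)))
             = ennreal (g * exp (-g)) * indicator {0..} g * (indicator {0..1} w * k (g*w) (g*(1-w)))"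
            using True a b by (auto simp: ennreal_mult' mult.assoc split: split_indicator)
        qed
        finally show ?thesis .
      next
        case False
        with elim have "g < 0" by simp
        then show ?thesis
          by (auto intro!: nn_integral_zero' simp: ennreal_neg split: split_indicator)
      qed
    qed
  qed
  finally show ?thesis .
qed

lemma exp1_2:
  fixes K :: "real \<Rightarrow> real \<Rightarrow> ennreal"
  assumes K[measurable]: "case_prod K \<in> borel_measurable (borel \<Otimes>\<^sub>M borel)"
  shows "(\<integral>\<^sup>+x. \<integral>\<^sup>+y. K x y \<partial>exp1 \<partial>exp1)
       = (\<integral>\<^sup>+x. \<integral>\<^sup>+y. ennreal (exp (-x)) * indicator {0..} x * (ennreal (exp (-y)) * indicator {0..} y * K x y) \<partial>lborel \<partial>lborel)"
proof -
  note kk[measurable] = meas_k2[OF K]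
  have "(\<integral>\<^sup>+x. \<integral>\<^sup>+y. K x y \<partial>exp1 \<partial>exp1) = (\<integral>\<^sup>+x. \<integral>\<^sup>+y. ennreal (exp (-y)) * indicator {0..} y * K x y \<partial>lborel \<partial>exp1)"
    by (intro nn_integral_cong nn_exp1) measurable
  also have "\<dots> = (\<integral>\<^sup>+x. ennreal (exp (-x)) * indicator {0..} x * (\<integral>\<^sup>+y. ennreal (exp (-y)) * indicator {0..} y * K x y \<partial>lborel) \<partial>lborel)"
    by (rule nn_exp1) measurable
  also have "\<dots> = (\<integral>\<^sup>+x. \<integral>\<^sup>+y. ennreal (exp (-x)) * indicator {0..} x * (ennreal (exp (-y)) * indicator {0..} y * K x y) \<partial>lborel \<partial>lborel)"
    by (intro nn_integral_cong nn_integral_cmult[symmetric]) measurable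
  finally show ?thesis .
qed

lemmas nnU[measurable (raw)] = sigma_finite_measure.borel_measurable_nn_integral[OF sf_unif01]
lemmas nnE[measurable (raw)] = sigma_finite_measure.borel_measurable_nn_integral[OF sf_exp1]

lemma coreC:
  fixes h :: "real \<Rightarrow> real \<Rightarrow> ennreal"
  assumes h[measurable]: "case_prod h \<in> borel_measurable (borel \<Otimes>\<^sub>M borel)"
    and a: "0 \<le> a" and b: "0 \<le> b"
  shows "(\<integral>\<^sup>+x. \<integral>\<^sup>+y. \<integral>\<^sup>+u. h (u*(a*pos x+b*pos y)) ((1-u)*(a*pos x+b*pos y)) \<partial>unif01 \<partial>exp1 \<partial>exp1)
       = (\<integral>\<^sup>+x. \<integral>\<^sup>+y. \<integral>\<^sup>+v. h (pos (v * a + (1 - v) * b)*pos x) (pos (v * a + (1 - v) * b)*pos y) \<partial>unif01 \<partial>exp1 \<partial>exp1)"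
proof -
  note hh[measurable] = meas_k2[OF h]
  define c where "c g = ennreal (g * exp (-g)) * indicator {0..} g" for g :: real
  define m where "m w = w*a+(1-w)*b" for w :: real
  have [measurable]: "c \<in> borel_measurable borel" "m \<in> borel_measurable borel"
    unfolding c_def m_def by measurable
  define Z where "Z = (\<integral>\<^sup>+g. \<integral>\<^sup>+u. \<integral>\<^sup>+w. c g * (indicator {0..1} u * (indicator {0..1} w * h (u*(g*m w)) ((1-u)*(g*m w)))) \<partial>lborel \<partial>lborel \<partial>lborel)"
  have m01: "0 \<le> m w" if "0 \<le> w" "w \<le> 1" for w
    using that a b unfolding m_def by (simp add: add_nonneg_nonneg mult_nonneg_nonneg)
  have "(\<integral>\<^sup>+x. \<integral>\<^sup>+y. \<integral>\<^sup>+u. h (u*(a*pos x+b*pos y)) ((1-u)*(a*pos x+b*pos y)) \<partial>unif01 \<partial>exp1 \<partial>exp1)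
     = (\<integral>\<^sup>+g. \<integral>\<^sup>+w. ennreal (g * exp (-g)) * indicator {0..} g * (indicator {0..1} w *
           (\<lambda>x y. \<integral>\<^sup>+u. h (u*(a*pos x+b*pos y)) ((1-u)*(a*pos x+b*pos y)) \<partial>unif01) (g*w) (g*(1-w))) \<partial>lborel \<partial>lborel)"
    using exp1_2[where K="\<lambda>x y. \<integral>\<^sup>+u. h (u*(a*pos x+b*pos y)) ((1-u)*(a*pos x+b*pos y)) \<partial>unif01"]
      polarA[where k="\<lambda>x y. \<integral>\<^sup>+u. h (u*(a*pos x+b*pos y)) ((1-u)*(a*pos x+b*pos y)) \<partial>unif01"]
    by (simp add: measurable_split_conv)
  also have "\<dots> = (\<integral>\<^sup>+g. \<integral>\<^sup>+w. \<integral>\<^sup>+u. c g * (indicator {0..1} w * (indicator {0..1} u * h (u*(g*m w)) ((1-u)*(g*m w)))) \<partial>lborel \<partial>lborel \<partial>lborel)"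
  proof (intro nn_integral_cong)
    fix g w :: real
    have "ennreal (g * exp (-g)) * indicator {0..} g * (indicator {0..1} w *
           (\<integral>\<^sup>+u. h (u*(a*pos (g*w)+b*pos (g*(1-w)))) ((1-u)*(a*pos (g*w)+b*pos (g*(1-w)))) \<partial>unif01))
       = c g * (indicator {0..1} w * (\<integral>\<^sup>+u. indicator {0..1} u * h (u*(g*m w)) ((1-u)*(g*m w)) \<partial>lborel))"
    proof (cases "0 \<le> g \<and> 0 \<le> w \<and> w \<le> 1")
      case True
      then have p: "pos (g*w) = g*w" "pos (g*(1-w)) = g*(1-w)" by auto
      then have "a*pos (g*w)+b*pos (g*(1-w)) = g * m w"
        unfolding p by (simp add: m_def algebra_simps)
      then show ?thesis using True
        by (simp add: c_def nn_unif01)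
    qed (auto simp: c_def)
    also have "\<dots> = (\<integral>\<^sup>+u. c g * (indicator {0..1} w * (indicator {0..1} u * h (u*(g*m w)) ((1-u)*(g*m w)))) \<partial>lborel)"
      by (simp add: nn_integral_cmult[symmetric])
    finally show "ennreal (g * exp (-g)) * indicator {0..} g * (indicator {0..1} w *
           (\<lambda>x y. \<integral>\<^sup>+u. h (u*(a*pos x+b*pos y)) ((1-u)*(a*pos x+b*pos y)) \<partial>unif01) (g*w) (g*(1-w)))
       = (\<integral>\<^sup>+u. c g * (indicator {0..1} w * (indicator {0..1} u * h (u*(g*m w)) ((1-u)*(g*m w)))) \<partial>lborel)"
      by simp
  qed
  also have "\<dots> = Z"
    unfolding Z_def
  proof (rule nn_integral_cong)
    fix g :: real
    show "(\<integral>\<^sup>+w. \<integral>\<^sup>+u. c g * (indicator {0..1} w * (indicator {0..1} u * h (u*(g*m w)) ((1-u)*(g*m w)))) \<partial>lborel \<partial>lborel)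
      = (\<integral>\<^sup>+u. \<integral>\<^sup>+w. c g * (indicator {0..1} u * (indicator {0..1} w * h (u*(g*m w)) ((1-u)*(g*m w)))) \<partial>lborel \<partial>lborel)"
    proof -
      have "(\<integral>\<^sup>+w. \<integral>\<^sup>+u. c g * (indicator {0..1} w * (indicator {0..1} u * h (u*(g*m w)) ((1-u)*(g*m w)))) \<partial>lborel \<partial>lborel)
        = (\<integral>\<^sup>+u. \<integral>\<^sup>+w. c g * (indicator {0..1} w * (indicator {0..1} u * h (u*(g*m w)) ((1-u)*(g*m w)))) \<partial>lborel \<partial>lborel)"
        by (rule pair_sigma_finite.Fubini'[OF lborel_pair]) measurable
      also have "\<dots> = (\<integral>\<^sup>+u. \<integral>\<^sup>+w. c g * (indicator {0..1} u * (indicator {0..1} w * h (u*(g*m w)) ((1-u)*(g*m w)))) \<partial>lborel \<partial>lborel)"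
        by (intro nn_integral_cong) (simp add: ac_simps)
      finally show ?thesis .
    qed
  qed
  finally have L: "(\<integral>\<^sup>+x. \<integral>\<^sup>+y. \<integral>\<^sup>+u. h (u*(a*pos x+b*pos y)) ((1-u)*(a*pos x+b*pos y)) \<partial>unif01 \<partial>exp1 \<partial>exp1) = Z" .
  have "(\<integral>\<^sup>+x. \<integral>\<^sup>+y. \<integral>\<^sup>+v. h (pos (v * a + (1 - v) * b)*pos x) (pos (v * a + (1 - v) * b)*pos y) \<partial>unif01 \<partial>exp1 \<partial>exp1)
     = (\<integral>\<^sup>+g. \<integral>\<^sup>+u. ennreal (g * exp (-g)) * indicator {0..} g * (indicator {0..1} u *
           (\<lambda>x y. \<integral>\<^sup>+v. h (pos (v * a + (1 - v) * b)*pos x) (pos (v * a + (1 - v) * b)*pos y) \<partial>unif01) (g*u) (g*(1-u))) \<partial>lborel \<partial>lborel)"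
    using exp1_2[where K="\<lambda>x y. \<integral>\<^sup>+v. h (pos (v * a + (1 - v) * b)*pos x) (pos (v * a + (1 - v) * b)*pos y) \<partial>unif01"]
      polarA[where k="\<lambda>x y. \<integral>\<^sup>+v. h (pos (v * a + (1 - v) * b)*pos x) (pos (v * a + (1 - v) * b)*pos y) \<partial>unif01"]
    by (simp add: measurable_split_conv)
  also have "\<dots> = Z"
    unfolding Z_def
  proof (intro nn_integral_cong)
    fix g u :: real
    have "ennreal (g * exp (-g)) * indicator {0..} g * (indicator {0..1} u *
           (\<integral>\<^sup>+v. h (pos (v * a + (1 - v) * b)*pos (g*u)) (pos (v * a + (1 - v) * b)*pos (g*(1-u))) \<partial>unif01))
       = c g * (indicator {0..1} u * (\<integral>\<^sup>+w. indicator {0..1} w * h (u*(g*m w)) ((1-u)*(g*m w)) \<partial>lborel))"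
    proof (cases "0 \<le> g \<and> 0 \<le> u \<and> u \<le> 1")
      case True
      have "(\<integral>\<^sup>+v. h (pos (v * a + (1 - v) * b)*pos (g*u)) (pos (v * a + (1 - v) * b)*pos (g*(1-u))) \<partial>unif01)
          = (\<integral>\<^sup>+w. indicator {0..1} w * h (pos (w * a + (1 - w) * b)*pos (g*u)) (pos (w * a + (1 - w) * b)*pos (g*(1-u))) \<partial>lborel)"
        by (rule nn_unif01) measurable
      also have "\<dots> = (\<integral>\<^sup>+w. indicator {0..1} w * h (u*(g*m w)) ((1-u)*(g*m w)) \<partial>lborel)"
      proof (rule nn_integral_cong)
        fix w :: real
        show "indicator {0..1} w * h (pos (w * a + (1 - w) * b)*pos (g*u)) (pos (w * a + (1 - w) * b)*pos (g*(1-u)))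
            = indicator {0..1} w * h (u*(g*m w)) ((1-u)*(g*m w))"
        proof (cases "0 \<le> w \<and> w \<le> 1")
          case True2: True
          have "pos (w * a + (1 - w) * b) = m w" using m01[of w] True2 by (simp add: m_def)
          moreover have "pos (g*u) = g*u" "pos (g*(1-u)) = g*(1-u)" using True by auto
          ultimately show ?thesis by (simp add: ac_simps)
        qed auto
      qed
      finally show ?thesis using True by (simp add: c_def)
    qed (auto simp: c_def)
    also have "\<dots> = (\<integral>\<^sup>+w. c g * (indicator {0..1} u * (indicator {0..1} w * h (u*(g*m w)) ((1-u)*(g*m w)))) \<partial>lborel)"
      by (simp add: nn_integral_cmult[symmetric])
    finally show "ennreal (g * exp (-g)) * indicator {0..} g * (indicator {0..1} u *
           (\<lambda>x y. \<integral>\<^sup>+v. h (pos (v * a + (1 - v) * b)*pos x) (pos (v * a + (1 - v) * b)*pos y) \<partial>unif01) (g*u) (g*(1-u)))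
       = (\<integral>\<^sup>+w. c g * (indicator {0..1} u * (indicator {0..1} w * h (u*(g*m w)) ((1-u)*(g*m w)))) \<partial>lborel)"
      by simp
  qed
  finally show ?thesis using L by simp
qed

lemma pair_EU: "pair_sigma_finite exp1 unif01"
  by (simp add: pair_sigma_finite_def sf_exp1 sf_unif01)

lemma coreD:
  fixes h :: "real \<Rightarrow> real \<Rightarrow> ennreal"
  assumes h[measurable]: "case_prod h \<in> borel_measurable (borel \<Otimes>\<^sub>M borel)"
    and a: "0 \<le> a" and T: "0 < T"
  shows "(\<integral>\<^sup>+x. \<integral>\<^sup>+y. \<integral>\<^sup>+u. \<integral>\<^sup>+b. h (u*(a*pos x+T*pos y)) (b*T) \<partial>exp1 \<partial>unif01 \<partial>exp1 \<partial>exp1)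
       = (\<integral>\<^sup>+x. \<integral>\<^sup>+y. \<integral>\<^sup>+v. h (pos (v * a + (1 - v) * T)*pos x) (T*pos y) \<partial>unif01 \<partial>exp1 \<partial>exp1)"
proof -
  note hh[measurable] = meas_k2[OF h]
  define h2 where "h2 p q = (\<integral>\<^sup>+b. h p (b*T) \<partial>exp1)" for p q :: real
  have h2m[measurable]: "case_prod h2 \<in> borel_measurable (borel \<Otimes>\<^sub>M borel)"
    unfolding h2_def by measurable
  have "(\<integral>\<^sup>+x. \<integral>\<^sup>+y. \<integral>\<^sup>+u. \<integral>\<^sup>+b. h (u*(a*pos x+T*pos y)) (b*T) \<partial>exp1 \<partial>unif01 \<partial>exp1 \<partial>exp1)
     = (\<integral>\<^sup>+x. \<integral>\<^sup>+y. \<integral>\<^sup>+u. h2 (u*(a*pos x+T*pos y)) ((1-u)*(a*pos x+T*pos y)) \<partial>unif01 \<partial>exp1 \<partial>exp1)"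
    by (simp add: h2_def)
  also have "\<dots> = (\<integral>\<^sup>+x. \<integral>\<^sup>+y. \<integral>\<^sup>+v. h2 (pos (v * a + (1 - v) * T)*pos x) (pos (v * a + (1 - v) * T)*pos y) \<partial>unif01 \<partial>exp1 \<partial>exp1)"
    using T a by (intro coreC h2m) auto
  also have "\<dots> = (\<integral>\<^sup>+x. \<integral>\<^sup>+y. (\<integral>\<^sup>+v. \<integral>\<^sup>+b. h (pos (v * a + (1 - v) * T)*pos x) (b*T) \<partial>exp1 \<partial>unif01) \<partial>exp1 \<partial>exp1)"
    by (simp add: h2_def)
  also have "\<dots> = (\<integral>\<^sup>+x. (\<integral>\<^sup>+v. \<integral>\<^sup>+b. h (pos (v * a + (1 - v) * T)*pos x) (b*T) \<partial>exp1 \<partial>unif01) \<partial>exp1)"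
    by (intro nn_integral_cong) (simp add: prob_space.emeasure_space_1[OF prob_exp1])
  also have "\<dots> = (\<integral>\<^sup>+x. (\<integral>\<^sup>+v. \<integral>\<^sup>+y. h (pos (v * a + (1 - v) * T)*pos x) (T*pos y) \<partial>exp1 \<partial>unif01) \<partial>exp1)"
  proof (rule nn_integral_cong, rule nn_integral_cong)
    fix x v :: real
    show "(\<integral>\<^sup>+b. h (pos (v * a + (1 - v) * T)*pos x) (b*T) \<partial>exp1) = (\<integral>\<^sup>+y. h (pos (v * a + (1 - v) * T)*pos x) (T*pos y) \<partial>exp1)"
      by (subst (1 2) nn_exp1, measurable) (auto intro!: nn_integral_cong simp: mult.commute split: split_indicator)
  qed
  also have "\<dots> = (\<integral>\<^sup>+x. \<integral>\<^sup>+y. \<integral>\<^sup>+v. h (pos (v * a + (1 - v) * T)*pos x) (T*pos y) \<partial>unif01 \<partial>exp1 \<partial>exp1)"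
    by (intro nn_integral_cong pair_sigma_finite.Fubini'[OF pair_EU]) measurable
  finally show ?thesis .
qed

lemma measure_eq_nn:
  assumes "sets M = sets N"
    and "\<And>f. f \<in> borel_measurable N \<Longrightarrow> (\<integral>\<^sup>+x. f x \<partial>M) = (\<integral>\<^sup>+x. f x \<partial>N)"
  shows "M = N"
proof (rule measure_eqI[OF assms(1)])
  fix A assume A: "A \<in> sets M"
  then have "A \<in> sets N" using assms(1) by simp
  then have "indicator A \<in> borel_measurable N" by simp
  from assms(2)[OF this] show "emeasure M A = emeasure N A"
    using A \<open>A \<in> sets N\<close> by (simp add: nn_integral_indicator)
qed

lemma exp_mean_distr: "exp_mean c = distr exp1 borel (\<lambda>x. pos c * pos x)"
proof (cases "c \<le> 0")
  case True
  then have "pos c = 0" by (simp add: pos_def)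
  then show ?thesis using True prob_space.distr_const[OF prob_exp1, of 0 borel, symmetric]
    by (simp add: exp_mean_def)
next
  case False
  then have c: "c > 0" by simp
  show ?thesis
  proof (rule measure_eq_nn)
    show "sets (exp_mean c) = sets (distr exp1 borel (\<lambda>x. pos c * pos x))"
      using c by (simp add: exp_mean_def)
    fix f :: "real \<Rightarrow> ennreal" assume "f \<in> borel_measurable (distr exp1 borel (\<lambda>x. pos c * pos x))"
    then have f[measurable]: "f \<in> borel_measurable borel" by simp
    have "(\<integral>\<^sup>+x. f x \<partial>distr exp1 borel (\<lambda>x. pos c * pos x)) = (\<integral>\<^sup>+x. f (pos c * pos x) \<partial>exp1)"
      by (rule nn_integral_distr) measurable
    also have "\<dots> = (\<integral>\<^sup>+x. ennreal (exp (-x)) * indicator {0..} x * f (c * pos x) \<partial>lborel)"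
      using c by (subst nn_exp1) (auto simp: pos_def)
    also have "\<dots> = ennreal \<bar>1/c\<bar> * (\<integral>\<^sup>+y. ennreal (exp (-(0 + 1/c*y))) * indicator {0..} (0 + 1/c*y) * f (c * pos (0 + 1/c*y)) \<partial>lborel)"
      using c by (intro nn_integral_real_affine) auto
    also have "\<dots> = (\<integral>\<^sup>+y. ennreal \<bar>1/c\<bar> * (ennreal (exp (-(0 + 1/c*y))) * indicator {0..} (0 + 1/c*y) * f (c * pos (0 + 1/c*y))) \<partial>lborel)"
      by (rule nn_integral_cmult[symmetric]) measurable
    also have "\<dots> = (\<integral>\<^sup>+y. ennreal (exponential_density (1/c) y) * f y \<partial>lborel)"
    proof (rule nn_integral_cong)
      fix y :: real
      show "ennreal \<bar>1/c\<bar> * (ennreal (exp (-(0 + 1/c*y))) * indicator {0..} (0 + 1/c*y) * f (c * pos (0 + 1/c*y)))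
          = ennreal (exponential_density (1/c) y) * f y"
      proof (cases "0 \<le> y")
        case True
        then have "pos (1/c*y) = 1/c*y" using c by simp
        then have "c * pos (0 + 1/c*y) = y" using c by simp
        moreover have "0 \<le> 1/c*y" using c True by simp
        moreover have "ennreal (1 / c) * ennreal (exp (- (y / c))) = ennreal (exp (- (y / c)) / c)"
          using c by (simp add: ennreal_mult[symmetric])
        ultimately show ?thesis using c True
          by (simp add: exponential_density_def mult.assoc[symmetric])
      next
        case False
        then have "\<not> 0 \<le> 1/c*y" using c by (simp add: zero_le_divide_iff)
        then show ?thesis using False by (simp add: exponential_density_def)
      qed
    qed
    also have "\<dots> = (\<integral>\<^sup>+x. f x \<partial>exp_mean c)"
      using c by (simp add: exp_mean_def nn_integral_density)
    finally show "(\<integral>\<^sup>+x. f x \<partial>exp_mean c) = (\<integral>\<^sup>+x. f x \<partial>distr exp1 borel (\<lambda>x. pos c * pos x))" by simp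
  qed
qed

definition Phi :: "'v set \<Rightarrow> ('v \<Rightarrow> real) \<Rightarrow> ('v \<Rightarrow> real) \<Rightarrow> ('v \<Rightarrow> real)" where
  "Phi W s e = (\<lambda>l\<in>W. pos (s l) * pos (e l))"

definition EE :: "'v set \<Rightarrow> ('v \<Rightarrow> real) measure" where
  "EE W = PiM W (\<lambda>_. exp1)"

lemma sets_EE[measurable_cong]: "sets (EE W) = sets (stsp W)"
  unfolding EE_def stsp_def by (intro sets_PiM_cong) auto

lemma space_EE: "space (EE W) = space (stsp W)"
  using sets_EE by (rule sets_eq_imp_space_eq)

lemma space_stsp: "space (stsp W) = (\<Pi>\<^sub>E i\<in>W. UNIV)"
  by (simp add: stsp_def space_PiM)

lemma prob_EE: "finite W \<Longrightarrow> prob_space (EE W)"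
  unfolding EE_def using prob_exp1 by (intro prob_space_PiM) auto

lemma psf_exp1: "product_sigma_finite (\<lambda>_. exp1)"
  using sf_exp1 by (simp add: product_sigma_finite_def)

lemma meas_Phi[measurable]: "(\<lambda>(s, e). Phi W s e) \<in> measurable (stsp W \<Otimes>\<^sub>M stsp W) (stsp W)"
  unfolding Phi_def stsp_def by measurable

lemma meas_Phi1[measurable]: "Phi W s \<in> measurable (EE W) (stsp W)"
  unfolding Phi_def stsp_def EE_def by measurable

lemma Kexp_distr:
  assumes W: "finite W"
  shows "PiM W (\<lambda>l. exp_mean (s l)) = distr (EE W) (stsp W) (Phi W s)"
proof -
  have psf: "product_sigma_finite (\<lambda>l. exp_mean (s l))"
    unfolding product_sigma_finite_def exp_mean_distr
    using prob_exp1 by (auto intro!: prob_space_imp_sigma_finite prob_space.prob_space_distr)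
  have se: "sets (exp_mean c) = sets borel" for c by (simp add: exp_mean_distr)
  show ?thesis
  proof (rule product_sigma_finite.PiM_eqI[OF psf W, symmetric])
    show "sets (distr (EE W) (stsp W) (Phi W s)) = sets (PiM W (\<lambda>l. exp_mean (s l)))"
      unfolding sets_distr stsp_def using se by (intro sets_PiM_cong) auto
    fix A assume A: "\<And>i. i \<in> W \<Longrightarrow> A i \<in> sets (exp_mean (s i))"
    then have A': "\<And>i. i \<in> W \<Longrightarrow> A i \<in> sets borel" using se by auto
    have "Pi\<^sub>E W A \<in> sets (stsp W)" unfolding stsp_def using A' W by (intro sets_PiM_I_finite) auto
    then have "emeasure (distr (EE W) (stsp W) (Phi W s)) (Pi\<^sub>E W A) = emeasure (EE W) (Phi W s -` Pi\<^sub>E W A \<inter> space (EE W))"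
      by (rule emeasure_distr[OF meas_Phi1])
    also have "Phi W s -` Pi\<^sub>E W A \<inter> space (EE W) = Pi\<^sub>E W (\<lambda>l. (\<lambda>x. pos (s l) * pos x) -` A l)"
      by (auto simp: Phi_def space_EE space_stsp PiE_iff)
    also have "emeasure (EE W) \<dots> = (\<Prod>l\<in>W. emeasure exp1 ((\<lambda>x. pos (s l) * pos x) -` A l))"
      unfolding EE_def
    proof (rule product_sigma_finite.emeasure_PiM[OF psf_exp1 W])
      fix l assume "l \<in> W"
      with A' show "(\<lambda>x. pos (s l) * pos x) -` A l \<in> sets exp1"
        using measurable_sets[of "(\<lambda>x. pos (s l) * pos x)" borel borel "A l"] by simp
    qed
    also have "\<dots> = (\<Prod>l\<in>W. emeasure (exp_mean (s l)) (A l))"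
    proof (rule prod.cong[OF refl])
      fix l assume "l \<in> W"
      with A' show "emeasure exp1 ((\<lambda>x. pos (s l) * pos x) -` A l) = emeasure (exp_mean (s l)) (A l)"
        unfolding exp_mean_distr by (subst emeasure_distr) auto
    qed
    finally show "emeasure (distr (EE W) (stsp W) (Phi W s)) (Pi\<^sub>E W A) = (\<Prod>l\<in>W. emeasure (exp_mean (s l)) (A l))" .
  qed
qed

lemma EE_subprob: "finite W \<Longrightarrow> EE W \<in> space (subprob_algebra (EE W))"
  using prob_EE by (auto simp: space_subprob_algebra intro: prob_space_imp_subprob_space)

lemma Kmeas:
  assumes W: "finite W"
  shows "(\<lambda>s. distr (EE W) (stsp W) (Phi W s)) \<in> measurable (stsp W) (subprob_algebra (stsp W))"
proof (rule measurable_distr2[where f="\<lambda>s e. Phi W s e" and g="\<lambda>_. EE W"])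
  show "(\<lambda>(s, e). Phi W s e) \<in> measurable (stsp W \<Otimes>\<^sub>M EE W) (stsp W)"
    using meas_Phi[of W] by (simp add: measurable_cong_sets[OF sets_pair_measure_cong[OF refl sets_EE] refl])
  show "(\<lambda>_. EE W) \<in> measurable (stsp W) (subprob_algebra (EE W))"
    using EE_subprob[OF W] by (rule measurable_const)
qed

lemma exp_mixture_alt:
  assumes W: "finite W" and nu: "sets \<nu> = sets (stsp W)"
  shows "exp_mixture W \<nu> = \<nu> \<bind> (\<lambda>s. distr (EE W) (stsp W) (Phi W s))"
  unfolding exp_mixture_def by (intro bind_cong refl Kexp_distr W)

lemma Kmeas':
  assumes W: "finite W" and nu: "sets \<nu> = sets (stsp W)"
  shows "(\<lambda>s. distr (EE W) (stsp W) (Phi W s)) \<in> measurable \<nu> (subprob_algebra (stsp W))"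
  using Kmeas[OF W] by (simp add: measurable_cong_sets[OF nu refl])

lemma R1:
  assumes W: "finite W" and nu: "sets \<nu> = sets (stsp W)"
    and f: "f \<in> borel_measurable (stsp W)"
  shows "(\<integral>\<^sup>+z. f z \<partial>exp_mixture W \<nu>) = (\<integral>\<^sup>+s. \<integral>\<^sup>+e. f (Phi W s e) \<partial>EE W \<partial>\<nu>)"
proof -
  have "(\<integral>\<^sup>+z. f z \<partial>exp_mixture W \<nu>) = (\<integral>\<^sup>+s. \<integral>\<^sup>+z. f z \<partial>distr (EE W) (stsp W) (Phi W s) \<partial>\<nu>)"
    unfolding exp_mixture_alt[OF W nu] by (rule nn_integral_bind[OF f Kmeas'[OF W nu]])
  also have "\<dots> = (\<integral>\<^sup>+s. \<integral>\<^sup>+e. f (Phi W s e) \<partial>EE W \<partial>\<nu>)"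
    by (intro nn_integral_cong nn_integral_distr meas_Phi1) (use f in simp)
  finally show ?thesis .
qed

lemma sets_exp_mixture:
  assumes W: "finite W" and nu: "sets \<nu> = sets (stsp W)" and ne: "space \<nu> \<noteq> {}"
  shows "sets (exp_mixture W \<nu>) = sets (stsp W)"
  unfolding exp_mixture_alt[OF W nu] by (rule sets_bind[OF _ ne]) simp

lemma prob_exp_mixture:
  assumes W: "finite W" and nu: "sets \<nu> = sets (stsp W)" and p: "prob_space \<nu>"
  shows "prob_space (exp_mixture W \<nu>)"
  unfolding exp_mixture_alt[OF W nu]
  by (rule prob_space.prob_space_bind[OF p _ Kmeas'[OF W nu]])
     (auto intro!: prob_space.prob_space_distr prob_EE W meas_Phi1)

lemma meas_into_stsp:
  assumes "\<And>l. l \<in> W \<Longrightarrow> (\<lambda>x. F x l) \<in> borel_measurable M"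
    and "\<And>x. x \<in> space M \<Longrightarrow> F x \<in> extensional W"
  shows "F \<in> measurable M (stsp W)"
proof -
  have "(\<lambda>x l. F x l) \<in> measurable M (PiM W (\<lambda>_. borel))"
    using assms by (intro measurable_PiM_single') (auto simp: PiE_def)
  then show ?thesis by (simp add: stsp_def)
qed

lemma meas_comp_stsp:
  assumes "l \<in> W" "F \<in> measurable M (stsp W)"
  shows "(\<lambda>x. F x l) \<in> borel_measurable M"
  using assms unfolding stsp_def by measurable

lemma ext_stsp: "x \<in> space (stsp W) \<Longrightarrow> x \<in> extensional W"
  by (simp add: space_stsp PiE_def)

lemma Phi_upd:
  assumes "i \<in> W" "j \<in> W" "i \<noteq> j"
  shows "Phi W s (e(i:=x, j:=y)) = (Phi W s e)(i := pos (s i) * pos x, j := pos (s j) * pos y)"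
  using assms by (auto simp: Phi_def fun_eq_iff)

lemma meas_upd2:
  assumes "i \<in> W" "j \<in> W" "Q \<in> space (stsp W)"
  shows "(\<lambda>(p, q). Q(i := p, j := q)) \<in> measurable (borel \<Otimes>\<^sub>M borel) (stsp W)"
proof (rule meas_into_stsp)
  fix l assume "l \<in> W"
  then show "(\<lambda>x. (case x of (p, q) \<Rightarrow> Q(i := p, j := q)) l) \<in> borel_measurable (borel \<Otimes>\<^sub>M borel)"
    by (cases "l = j"; cases "l = i") (auto simp: split_beta')
next
  fix x show "(case x of (p, q) \<Rightarrow> Q(i := p, j := q)) \<in> extensional W"
    using assms ext_stsp[OF assms(3)] by (auto simp: split_beta' extensional_def)
qed

definition kmap :: "'v \<Rightarrow> 'v \<Rightarrow> ('v \<Rightarrow> real) \<times> real \<Rightarrow> ('v \<Rightarrow> real)" where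
  "kmap i j = (\<lambda>(\<zeta>, u). \<zeta>(i := u * (\<zeta> i + \<zeta> j), j := (1 - u) * (\<zeta> i + \<zeta> j)))"

definition bmap :: "('v \<Rightarrow> real) \<Rightarrow> 'v \<Rightarrow> 'v \<Rightarrow> (('v \<Rightarrow> real) \<times> real) \<times> real \<Rightarrow> ('v \<Rightarrow> real)" where
  "bmap T i j = (\<lambda>((\<zeta>, u), b). \<zeta>(i := u * (\<zeta> i + \<zeta> j), j := b * T j))"

definition omap :: "'v set \<Rightarrow> 'v \<Rightarrow> 'v \<Rightarrow> ('v \<Rightarrow> real) \<times> real \<Rightarrow> ('v \<Rightarrow> real)" where
  "omap V i j = (\<lambda>(x, v). (\<lambda>l. if l \<in> {i, j} \<inter> V then v * x i + (1 - v) * x j else x l))"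

lemma meas_kmap:
  assumes "i \<in> W" "j \<in> W"
  shows "kmap i j \<in> measurable (stsp W \<Otimes>\<^sub>M (borel :: real measure)) (stsp W)"
proof (rule meas_into_stsp)
  fix l assume l: "l \<in> W"
  have [measurable]: "(\<lambda>x. fst x i) \<in> borel_measurable (stsp W \<Otimes>\<^sub>M (borel :: real measure))"
       "(\<lambda>x. fst x j) \<in> borel_measurable (stsp W \<Otimes>\<^sub>M (borel :: real measure))"
       "(\<lambda>x. fst x l) \<in> borel_measurable (stsp W \<Otimes>\<^sub>M (borel :: real measure))"
    using assms l by (auto intro!: meas_comp_stsp measurable_fst'')
  show "(\<lambda>x. kmap i j x l) \<in> borel_measurable (stsp W \<Otimes>\<^sub>M (borel :: real measure))"
    by (cases "l = j"; cases "l = i") (auto simp: kmap_def split_beta')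
next
  fix x assume "x \<in> space (stsp W \<Otimes>\<^sub>M (borel :: real measure))"
  then show "kmap i j x \<in> extensional W"
    using assms by (auto simp: kmap_def split_beta' space_pair_measure extensional_def space_stsp PiE_def)
qed

lemma meas_bmap:
  assumes "i \<in> W" "j \<in> W"
  shows "bmap T i j \<in> measurable ((stsp W \<Otimes>\<^sub>M (borel :: real measure)) \<Otimes>\<^sub>M (borel :: real measure)) (stsp W)"
proof (rule meas_into_stsp)
  fix l assume l: "l \<in> W"
  have [measurable]: "(\<lambda>x. fst (fst x) i) \<in> borel_measurable ((stsp W \<Otimes>\<^sub>M (borel :: real measure)) \<Otimes>\<^sub>M (borel :: real measure))"
       "(\<lambda>x. fst (fst x) j) \<in> borel_measurable ((stsp W \<Otimes>\<^sub>M (borel :: real measure)) \<Otimes>\<^sub>M (borel :: real measure))"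
       "(\<lambda>x. fst (fst x) l) \<in> borel_measurable ((stsp W \<Otimes>\<^sub>M (borel :: real measure)) \<Otimes>\<^sub>M (borel :: real measure))"
    using assms l by (auto intro!: meas_comp_stsp measurable_fst'')
  show "(\<lambda>x. bmap T i j x l) \<in> borel_measurable ((stsp W \<Otimes>\<^sub>M (borel :: real measure)) \<Otimes>\<^sub>M (borel :: real measure))"
    by (cases "l = j"; cases "l = i") (auto simp: bmap_def split_beta')
next
  fix x assume "x \<in> space ((stsp W \<Otimes>\<^sub>M (borel :: real measure)) \<Otimes>\<^sub>M (borel :: real measure))"
  then show "bmap T i j x \<in> extensional W"
    using assms by (auto simp: bmap_def split_beta' space_pair_measure extensional_def space_stsp PiE_def)
qed

lemma meas_omap:
  assumes "i \<in> W" "j \<in> W" "V \<subseteq> W"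
  shows "omap V i j \<in> measurable (stsp W \<Otimes>\<^sub>M (borel :: real measure)) (stsp W)"
proof (rule meas_into_stsp)
  fix l assume l: "l \<in> W"
  have [measurable]: "(\<lambda>x. fst x i) \<in> borel_measurable (stsp W \<Otimes>\<^sub>M (borel :: real measure))"
       "(\<lambda>x. fst x j) \<in> borel_measurable (stsp W \<Otimes>\<^sub>M (borel :: real measure))"
       "(\<lambda>x. fst x l) \<in> borel_measurable (stsp W \<Otimes>\<^sub>M (borel :: real measure))"
    using assms l by (auto intro!: meas_comp_stsp measurable_fst'')
  show "(\<lambda>x. omap V i j x l) \<in> borel_measurable (stsp W \<Otimes>\<^sub>M (borel :: real measure))"
    by (cases "l \<in> {i, j} \<inter> V") (auto simp: omap_def split_beta')
next
  fix x assume "x \<in> space (stsp W \<Otimes>\<^sub>M (borel :: real measure))"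
  then show "omap V i j x \<in> extensional W"
    using assms by (auto simp: omap_def split_beta' space_pair_measure extensional_def space_stsp PiE_def)
qed

lemma split2:
  assumes W: "finite W" and ij: "i \<in> W" "j \<in> W" "i \<noteq> j"
    and G: "G \<in> borel_measurable (EE W)"
  shows "(\<integral>\<^sup>+e. G e \<partial>EE W) = (\<integral>\<^sup>+e2. \<integral>\<^sup>+x. \<integral>\<^sup>+y. G (e2(i := x, j := y)) \<partial>exp1 \<partial>exp1 \<partial>EE (W - {i, j}))"
proof -
  interpret product_sigma_finite "\<lambda>_. exp1" by (rule psf_exp1)
  define W' where "W' = W - {i, j}"
  have WW: "W = insert j (insert i W')" using ij by (auto simp: W'_def)
  have fW': "finite W'" using W by (simp add: W'_def)
  have nj: "j \<notin> insert i W'" and ni: "i \<notin> W'" using ij by (auto simp: W'_def)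
  have G': "G \<in> borel_measurable (PiM (insert j (insert i W')) (\<lambda>_. exp1))"
    using G unfolding EE_def WW .
  have "(\<integral>\<^sup>+e. G e \<partial>EE W) = (\<integral>\<^sup>+e1. \<integral>\<^sup>+y. G (e1(j := y)) \<partial>exp1 \<partial>PiM (insert i W') (\<lambda>_. exp1))"
    unfolding EE_def WW using fW' nj G' by (intro product_nn_integral_insert) auto
  also have "\<dots> = (\<integral>\<^sup>+e2. \<integral>\<^sup>+x. \<integral>\<^sup>+y. G (e2(i := x, j := y)) \<partial>exp1 \<partial>exp1 \<partial>PiM W' (\<lambda>_. exp1))"
  proof (rule product_nn_integral_insert[OF fW' ni])
    have "(\<lambda>(e1, y). G (e1(j := y))) \<in> borel_measurable (PiM (insert i W') (\<lambda>_. exp1) \<Otimes>\<^sub>M exp1)"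
      using measurable_compose[OF measurable_add_dim[of j "insert i W'" "\<lambda>_. exp1"] G'] by (simp add: split_beta')
    then show "(\<lambda>e1. \<integral>\<^sup>+y. G (e1(j := y)) \<partial>exp1) \<in> borel_measurable (PiM (insert i W') (\<lambda>_. exp1))"
      using sigma_finite_measure.borel_measurable_nn_integral[OF sf_exp1, of "\<lambda>e1 y. G (e1(j := y))"] by simp
  qed
  finally show ?thesis unfolding EE_def W'_def .
qed

lemma upd_eq2:
  assumes "\<And>l. l \<noteq> i \<Longrightarrow> l \<noteq> j \<Longrightarrow> F l = G l"
  shows "F(i := p, j := q) = G(i := p, j := q)"
  using assms by (auto simp: fun_eq_iff)

lemma sets_pair_unif[measurable_cong]: "sets (M \<Otimes>\<^sub>M unif01) = sets (M \<Otimes>\<^sub>M (borel :: real measure))"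
  by (rule sets_pair_measure_cong) auto

lemma Phi_space[simp]: "Phi W s e \<in> space (stsp W)"
  by (simp add: Phi_def space_stsp)

lemma meas_Phi_s: "(\<lambda>(e, u). (Phi W s e, u)) \<in> measurable (EE W \<Otimes>\<^sub>M (borel :: real measure)) (stsp W \<Otimes>\<^sub>M (borel :: real measure))"
  by measurable

lemma edge_int:
  assumes W: "finite W" and ij: "i \<in> V" "j \<in> V" "V \<subseteq> W" "i \<noteq> j"
    and s: "0 \<le> s i" "0 \<le> s j" and sW: "s \<in> space (stsp W)"
    and f[measurable]: "f \<in> borel_measurable (stsp W)"
  shows "(\<integral>\<^sup>+e. \<integral>\<^sup>+u. f (kmap i j (Phi W s e, u)) \<partial>unif01 \<partial>EE W)
       = (\<integral>\<^sup>+e. \<integral>\<^sup>+v. f (Phi W (omap V i j (s, v)) e) \<partial>unif01 \<partial>EE W)"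
proof -
  have iW: "i \<in> W" "j \<in> W" using ij by auto
  note mk[measurable] = meas_kmap[OF iW]
  note mo[measurable] = meas_omap[OF iW ij(3)]
  define a where "a = pos (s i)"
  define b where "b = pos (s j)"
  have ab: "0 \<le> a" "0 \<le> b" "a = s i" "b = s j" using s by (auto simp: a_def b_def pos_def)
  have m1: "(\<lambda>(e, u). f (kmap i j (Phi W s e, u))) \<in> borel_measurable (EE W \<Otimes>\<^sub>M unif01)"
    using measurable_compose[OF measurable_compose[OF meas_Phi_s mk] f]
    by (simp add: measurable_cong_sets[OF sets_pair_unif refl] split_beta')
  have G1: "(\<lambda>e. \<integral>\<^sup>+u. f (kmap i j (Phi W s e, u)) \<partial>unif01) \<in> borel_measurable (EE W)"
    using sigma_finite_measure.borel_measurable_nn_integral[OF sf_unif01, of "\<lambda>e u. f (kmap i j (Phi W s e, u))"] m1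
    by simp
  have m2: "(\<lambda>(e, v). f (Phi W (omap V i j (s, v)) e)) \<in> borel_measurable (EE W \<Otimes>\<^sub>M unif01)"
  proof -
    have c1: "(\<lambda>x. (s, snd x)) \<in> measurable (EE W \<Otimes>\<^sub>M (borel :: real measure)) (stsp W \<Otimes>\<^sub>M (borel :: real measure))"
      using sW by (intro measurable_Pair measurable_const) auto
    have c2: "fst \<in> measurable (EE W \<Otimes>\<^sub>M (borel :: real measure)) (stsp W)"
      using measurable_fst[of "EE W" "borel :: real measure"] by (simp add: measurable_cong_sets[OF refl sets_EE])
    have "(\<lambda>x. (omap V i j (s, snd x), fst x)) \<in> measurable (EE W \<Otimes>\<^sub>M (borel :: real measure)) (stsp W \<Otimes>\<^sub>M stsp W)"
      using measurable_compose[OF c1 mo] c2 by (intro measurable_Pair) (auto simp: o_def)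
    then have "(\<lambda>(e, v). (omap V i j (s, v), e)) \<in> measurable (EE W \<Otimes>\<^sub>M (borel :: real measure)) (stsp W \<Otimes>\<^sub>M stsp W)"
      by (simp add: split_beta')
    from measurable_compose[OF measurable_compose[OF this meas_Phi] f] show ?thesis
      by (simp add: measurable_cong_sets[OF sets_pair_unif refl] split_beta')
  qed
  have G2: "(\<lambda>e. \<integral>\<^sup>+v. f (Phi W (omap V i j (s, v)) e) \<partial>unif01) \<in> borel_measurable (EE W)"
    using sigma_finite_measure.borel_measurable_nn_integral[OF sf_unif01, of "\<lambda>e v. f (Phi W (omap V i j (s, v)) e)"] m2
    by simp
  have "(\<integral>\<^sup>+e. \<integral>\<^sup>+u. f (kmap i j (Phi W s e, u)) \<partial>unif01 \<partial>EE W)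
     = (\<integral>\<^sup>+e2. \<integral>\<^sup>+x. \<integral>\<^sup>+y. \<integral>\<^sup>+u. f (kmap i j (Phi W s (e2(i := x, j := y)), u)) \<partial>unif01 \<partial>exp1 \<partial>exp1 \<partial>EE (W - {i, j}))"
    by (rule split2[OF W iW ij(4) G1])
  also have "\<dots> = (\<integral>\<^sup>+e2. \<integral>\<^sup>+x. \<integral>\<^sup>+y. \<integral>\<^sup>+v. f (Phi W (omap V i j (s, v)) (e2(i := x, j := y))) \<partial>unif01 \<partial>exp1 \<partial>exp1 \<partial>EE (W - {i, j}))"
  proof (rule nn_integral_cong)
    fix e2
    define Q where "Q = Phi W s e2"
    define h where "h p q = f (Q(i := p, j := q))" for p q
    have hm: "case_prod h \<in> borel_measurable (borel \<Otimes>\<^sub>M borel)"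
      unfolding h_def using measurable_compose[OF meas_upd2[OF iW, of Q] f]
      by (simp add: Q_def split_beta')
    have L: "f (kmap i j (Phi W s (e2(i := x, j := y)), u)) = h (u*(a*pos x+b*pos y)) ((1-u)*(a*pos x+b*pos y))" for x y u
      unfolding h_def Q_def Phi_upd[OF iW ij(4)] kmap_def a_def b_def using ij(4) by simp
    have R: "f (Phi W (omap V i j (s, v)) (e2(i := x, j := y))) = h (pos (v * a + (1 - v) * b)*pos x) (pos (v * a + (1 - v) * b)*pos y)" for x y v
    proof -
      have "Phi W (omap V i j (s, v)) (e2(i := x, j := y)) = (Phi W (omap V i j (s, v)) e2)(i := pos (v * a + (1 - v) * b)*pos x, j := pos (v * a + (1 - v) * b)*pos y)"
        unfolding Phi_upd[OF iW ij(4)] using ij ab by (simp add: omap_def)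
      also have "\<dots> = Q(i := pos (v * a + (1 - v) * b)*pos x, j := pos (v * a + (1 - v) * b)*pos y)"
        unfolding Q_def by (rule upd_eq2) (auto simp: Phi_def omap_def)
      finally show ?thesis unfolding h_def by simp
    qed
    show "(\<integral>\<^sup>+x. \<integral>\<^sup>+y. \<integral>\<^sup>+u. f (kmap i j (Phi W s (e2(i := x, j := y)), u)) \<partial>unif01 \<partial>exp1 \<partial>exp1)
        = (\<integral>\<^sup>+x. \<integral>\<^sup>+y. \<integral>\<^sup>+v. f (Phi W (omap V i j (s, v)) (e2(i := x, j := y))) \<partial>unif01 \<partial>exp1 \<partial>exp1)"
      unfolding L R by (rule coreC[OF hm ab(1,2)])
  qed
  also have "\<dots> = (\<integral>\<^sup>+e. \<integral>\<^sup>+v. f (Phi W (omap V i j (s, v)) e) \<partial>unif01 \<partial>EE W)"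
    by (rule split2[OF W iW ij(4) G2, symmetric])
  finally show ?thesis .
qed

lemma sets_pair_exp1[measurable_cong]: "sets (M \<Otimes>\<^sub>M exp1) = sets (M \<Otimes>\<^sub>M (borel :: real measure))"
  by (rule sets_pair_measure_cong) auto

lemma edge_bnd:
  assumes W: "finite W" and ij: "i \<in> V" "j \<in> W" "j \<notin> V" "V \<subseteq> W"
    and s: "0 \<le> s i" "s j = T j" and Tj: "0 < T j" and sW: "s \<in> space (stsp W)"
    and f[measurable]: "f \<in> borel_measurable (stsp W)"
  shows "(\<integral>\<^sup>+e. \<integral>\<^sup>+u. \<integral>\<^sup>+b. f (bmap T i j ((Phi W s e, u), b)) \<partial>exp1 \<partial>unif01 \<partial>EE W)
       = (\<integral>\<^sup>+e. \<integral>\<^sup>+v. f (Phi W (omap V i j (s, v)) e) \<partial>unif01 \<partial>EE W)"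
proof -
  have iW: "i \<in> W" "j \<in> W" "i \<noteq> j" using ij by auto
  note mk[measurable] = meas_bmap[OF iW(1,2), of T]
  note mo[measurable] = meas_omap[OF iW(1,2) ij(4)]
  define a where "a = pos (s i)"
  have ab: "0 \<le> a" "a = s i" "pos (s j) = T j" using s Tj by (auto simp: a_def pos_def)
  have m0: "(\<lambda>((e, u), b). f (bmap T i j ((Phi W s e, u), b))) \<in> borel_measurable ((EE W \<Otimes>\<^sub>M unif01) \<Otimes>\<^sub>M exp1)"
  proof -
    have "(\<lambda>x. ((Phi W s (fst (fst x)), snd (fst x)), snd x)) \<in> measurable ((EE W \<Otimes>\<^sub>M (borel :: real measure)) \<Otimes>\<^sub>M (borel :: real measure)) ((stsp W \<Otimes>\<^sub>M (borel :: real measure)) \<Otimes>\<^sub>M (borel :: real measure))"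
      by measurable
    from measurable_compose[OF measurable_compose[OF this mk] f] show ?thesis
      by (simp add: measurable_cong_sets[OF sets_pair_exp1 refl] measurable_cong_sets[OF sets_pair_measure_cong[OF sets_pair_unif refl] refl] split_beta')
  qed
  have m1: "(\<lambda>(e, u). \<integral>\<^sup>+b. f (bmap T i j ((Phi W s e, u), b)) \<partial>exp1) \<in> borel_measurable (EE W \<Otimes>\<^sub>M unif01)"
    using sigma_finite_measure.borel_measurable_nn_integral[OF sf_exp1, of "\<lambda>eu b. f (bmap T i j ((Phi W s (fst eu), snd eu), b))"] m0
    by (simp add: split_beta')
  have G1: "(\<lambda>e. \<integral>\<^sup>+u. \<integral>\<^sup>+b. f (bmap T i j ((Phi W s e, u), b)) \<partial>exp1 \<partial>unif01) \<in> borel_measurable (EE W)"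
    using sigma_finite_measure.borel_measurable_nn_integral[OF sf_unif01, of "\<lambda>e u. \<integral>\<^sup>+b. f (bmap T i j ((Phi W s e, u), b)) \<partial>exp1"] m1
    by simp
  have m2: "(\<lambda>(e, v). f (Phi W (omap V i j (s, v)) e)) \<in> borel_measurable (EE W \<Otimes>\<^sub>M unif01)"
  proof -
    have c1: "(\<lambda>x. (s, snd x)) \<in> measurable (EE W \<Otimes>\<^sub>M (borel :: real measure)) (stsp W \<Otimes>\<^sub>M (borel :: real measure))"
      using sW by (intro measurable_Pair measurable_const) auto
    have c2: "fst \<in> measurable (EE W \<Otimes>\<^sub>M (borel :: real measure)) (stsp W)"
      using measurable_fst[of "EE W" "borel :: real measure"] by (simp add: measurable_cong_sets[OF refl sets_EE])
    have "(\<lambda>x. (omap V i j (s, snd x), fst x)) \<in> measurable (EE W \<Otimes>\<^sub>M (borel :: real measure)) (stsp W \<Otimes>\<^sub>M stsp W)"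
      using measurable_compose[OF c1 mo] c2 by (intro measurable_Pair) (auto simp: o_def)
    then have "(\<lambda>(e, v). (omap V i j (s, v), e)) \<in> measurable (EE W \<Otimes>\<^sub>M (borel :: real measure)) (stsp W \<Otimes>\<^sub>M stsp W)"
      by (simp add: split_beta')
    from measurable_compose[OF measurable_compose[OF this meas_Phi] f] show ?thesis
      by (simp add: measurable_cong_sets[OF sets_pair_unif refl] split_beta')
  qed
  have G2: "(\<lambda>e. \<integral>\<^sup>+v. f (Phi W (omap V i j (s, v)) e) \<partial>unif01) \<in> borel_measurable (EE W)"
    using sigma_finite_measure.borel_measurable_nn_integral[OF sf_unif01, of "\<lambda>e v. f (Phi W (omap V i j (s, v)) e)"] m2
    by simp
  have "(\<integral>\<^sup>+e. \<integral>\<^sup>+u. \<integral>\<^sup>+b. f (bmap T i j ((Phi W s e, u), b)) \<partial>exp1 \<partial>unif01 \<partial>EE W)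
     = (\<integral>\<^sup>+e2. \<integral>\<^sup>+x. \<integral>\<^sup>+y. \<integral>\<^sup>+u. \<integral>\<^sup>+b. f (bmap T i j ((Phi W s (e2(i := x, j := y)), u), b)) \<partial>exp1 \<partial>unif01 \<partial>exp1 \<partial>exp1 \<partial>EE (W - {i, j}))"
    by (rule split2[OF W iW G1])
  also have "\<dots> = (\<integral>\<^sup>+e2. \<integral>\<^sup>+x. \<integral>\<^sup>+y. \<integral>\<^sup>+v. f (Phi W (omap V i j (s, v)) (e2(i := x, j := y))) \<partial>unif01 \<partial>exp1 \<partial>exp1 \<partial>EE (W - {i, j}))"
  proof (rule nn_integral_cong)
    fix e2
    define Q where "Q = Phi W s e2"
    define h where "h p q = f (Q(i := p, j := q))" for p q
    have hm: "case_prod h \<in> borel_measurable (borel \<Otimes>\<^sub>M borel)"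
      unfolding h_def using measurable_compose[OF meas_upd2[OF iW(1,2), of Q] f]
      by (simp add: Q_def split_beta')
    have L: "f (bmap T i j ((Phi W s (e2(i := x, j := y)), u), b)) = h (u*(a*pos x+T j*pos y)) (b * T j)" for x y u b
      unfolding h_def Q_def Phi_upd[OF iW] bmap_def a_def using iW(3) ab by simp
    have R: "f (Phi W (omap V i j (s, v)) (e2(i := x, j := y))) = h (pos (v * a + (1 - v) * T j)*pos x) (T j*pos y)" for x y v
    proof -
      have "Phi W (omap V i j (s, v)) (e2(i := x, j := y)) = (Phi W (omap V i j (s, v)) e2)(i := pos (v * a + (1 - v) * T j)*pos x, j := T j*pos y)"
        unfolding Phi_upd[OF iW] using ij ab s iW(3) by (simp add: omap_def)
      also have "\<dots> = Q(i := pos (v * a + (1 - v) * T j)*pos x, j := T j*pos y)"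
        unfolding Q_def by (rule upd_eq2) (auto simp: Phi_def omap_def)
      finally show ?thesis unfolding h_def by simp
    qed
    show "(\<integral>\<^sup>+x. \<integral>\<^sup>+y. \<integral>\<^sup>+u. \<integral>\<^sup>+b. f (bmap T i j ((Phi W s (e2(i := x, j := y)), u), b)) \<partial>exp1 \<partial>unif01 \<partial>exp1 \<partial>exp1)
        = (\<integral>\<^sup>+x. \<integral>\<^sup>+y. \<integral>\<^sup>+v. f (Phi W (omap V i j (s, v)) (e2(i := x, j := y))) \<partial>unif01 \<partial>exp1 \<partial>exp1)"
      unfolding L R by (rule coreD[OF hm ab(1) Tj])
  qed
  also have "\<dots> = (\<integral>\<^sup>+e. \<integral>\<^sup>+v. f (Phi W (omap V i j (s, v)) e) \<partial>unif01 \<partial>EE W)"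
    by (rule split2[OF W iW G2, symmetric])
  finally show ?thesis .
qed

lemma space_stsp_ne: "space (stsp W) \<noteq> {}"
  by (simp add: space_stsp PiE_eq_empty_iff)

lemma sf_EE: "finite W \<Longrightarrow> sigma_finite_measure (EE W)"
  using prob_EE prob_space_imp_sigma_finite by blast

lemma meas_m2:
  assumes iW: "i \<in> W" "j \<in> W" and VW: "V \<subseteq> W" and sW: "s \<in> space (stsp W)"
    and f: "f \<in> borel_measurable (stsp W)"
  shows "(\<lambda>(e, v). f (Phi W (omap V i j (s, v)) e)) \<in> borel_measurable (EE W \<Otimes>\<^sub>M unif01)"
proof -
  note mo = meas_omap[OF iW VW]
  have c1: "(\<lambda>x. (s, snd x)) \<in> measurable (EE W \<Otimes>\<^sub>M (borel :: real measure)) (stsp W \<Otimes>\<^sub>M (borel :: real measure))"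
    using sW by (intro measurable_Pair measurable_const) auto
  have c2: "fst \<in> measurable (EE W \<Otimes>\<^sub>M (borel :: real measure)) (stsp W)"
    using measurable_fst[of "EE W" "borel :: real measure"] by (simp add: measurable_cong_sets[OF refl sets_EE])
  have "(\<lambda>x. (omap V i j (s, snd x), fst x)) \<in> measurable (EE W \<Otimes>\<^sub>M (borel :: real measure)) (stsp W \<Otimes>\<^sub>M stsp W)"
    using measurable_compose[OF c1 mo] c2 by (intro measurable_Pair) (auto simp: o_def)
  then have "(\<lambda>(e, v). (omap V i j (s, v), e)) \<in> measurable (EE W \<Otimes>\<^sub>M (borel :: real measure)) (stsp W \<Otimes>\<^sub>M stsp W)"
    by (simp add: split_beta')
  from measurable_compose[OF measurable_compose[OF this meas_Phi] f] show ?thesis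
    by (simp add: measurable_cong_sets[OF sets_pair_unif refl] split_beta')
qed

lemma edge_eq:
  fixes V B :: "'v set" and Eb :: "('v \<times> 'v) set" and T :: "'v \<Rightarrow> real"
  assumes finV: "finite V" and finB: "finite B" and disj: "V \<inter> B = {}"
    and edges: "Eb \<subseteq> V \<times> (V \<union> B)"
    and orient: "\<And>i j. (i, j) \<in> Eb \<Longrightarrow> (j, i) \<notin> Eb"
    and Tpos: "\<And>j. j \<in> B \<Longrightarrow> 0 < T j"
    and nu: "admissible_param V B T \<nu>"
    and e: "(i, j) \<in> Eb"
  shows "kmp_edge_step V B T i j (exp_mixture (V \<union> B) \<nu>) = exp_mixture (V \<union> B) (op_edge_step V B i j \<nu>)"
proof -
  define W where "W = V \<union> B"
  have W: "finite W" using finV finB by (simp add: W_def)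
  have ij: "i \<in> V" "j \<in> W" "i \<noteq> j" using e edges orient[OF e] by (auto simp: W_def)
  have VW: "V \<subseteq> W" by (auto simp: W_def)
  have snu: "sets \<nu> = sets (stsp W)" and pnu: "prob_space \<nu>"
    and ae: "AE s in \<nu>. (\<forall>i\<in>V. 0 \<le> s i) \<and> (\<forall>j\<in>B. s j = T j)"
    using nu by (auto simp: admissible_param_def W_def)
  have nne: "space \<nu> \<noteq> {}" using pnu prob_space.not_empty by blast
  define \<mu> where "\<mu> = exp_mixture W \<nu>"
  have smu: "sets \<mu> = sets (stsp W)" unfolding \<mu>_def by (rule sets_exp_mixture[OF W snu nne])
  have op: "op_edge_step V B i j \<nu> = distr (\<nu> \<Otimes>\<^sub>M unif01) (stsp W) (omap V i j)"
    by (simp add: op_edge_step_def omap_def W_def)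
  have mo: "omap V i j \<in> measurable (\<nu> \<Otimes>\<^sub>M unif01) (stsp W)"
    using meas_omap[OF _ ij(2) VW, of i] ij(1) VW
    by (simp add: measurable_cong_sets[OF sets_pair_measure_cong[OF snu sets_unif01] refl] subset_iff)
  have sop: "sets (op_edge_step V B i j \<nu>) = sets (stsp W)" unfolding op by simp
  have sopne: "space (op_edge_step V B i j \<nu>) \<noteq> {}" unfolding op using space_stsp_ne by simp
  show ?thesis
    unfolding W_def[symmetric] \<mu>_def[symmetric]
  proof (rule measure_eq_nn)
    show "sets (kmp_edge_step V B T i j \<mu>) = sets (exp_mixture W (op_edge_step V B i j \<nu>))"
    proof -
      have "sets (kmp_edge_step V B T i j \<mu>) = sets (stsp (V \<union> B))"
        unfolding kmp_edge_step_def by (cases "j \<in> B") (simp_all only: if_True if_False sets_distr)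
      then show ?thesis using sets_exp_mixture[OF W sop sopne] unfolding W_def by simp
    qed
    fix f :: "('v \<Rightarrow> real) \<Rightarrow> ennreal" assume "f \<in> borel_measurable (exp_mixture W (op_edge_step V B i j \<nu>))"
    then have f[measurable]: "f \<in> borel_measurable (stsp W)"
      using measurable_cong_sets[OF sets_exp_mixture[OF W sop sopne] refl, of borel] by blast
    have mF: "(\<lambda>s. \<integral>\<^sup>+e. f (Phi W s e) \<partial>EE W) \<in> borel_measurable (stsp W)"
    proof -
      have "(\<lambda>(s, e). f (Phi W s e)) \<in> borel_measurable (stsp W \<Otimes>\<^sub>M EE W)"
        using measurable_compose[OF meas_Phi f]
        by (simp add: measurable_cong_sets[OF sets_pair_measure_cong[OF refl sets_EE] refl] split_beta')
      then show ?thesis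
        using sigma_finite_measure.borel_measurable_nn_integral[OF sf_EE[OF W], of "\<lambda>s e. f (Phi W s e)"] by simp
    qed
    have "(\<integral>\<^sup>+z. f z \<partial>exp_mixture W (op_edge_step V B i j \<nu>))
        = (\<integral>\<^sup>+s. \<integral>\<^sup>+e. f (Phi W s e) \<partial>EE W \<partial>op_edge_step V B i j \<nu>)"
      by (rule R1[OF W sop f])
    also have "\<dots> = (\<integral>\<^sup>+p. (\<integral>\<^sup>+e. f (Phi W (omap V i j p) e) \<partial>EE W) \<partial>(\<nu> \<Otimes>\<^sub>M unif01))"
      unfolding op by (rule nn_integral_distr[OF mo]) (use mF in \<open>simp add: measurable_cong_sets[OF sets_distr refl]\<close>)
    also have "\<dots> = (\<integral>\<^sup>+s. \<integral>\<^sup>+v. \<integral>\<^sup>+e. f (Phi W (omap V i j (s, v)) e) \<partial>EE W \<partial>unif01 \<partial>\<nu>)"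
      by (rule sigma_finite_measure.nn_integral_fst[OF sf_unif01, symmetric])
         (rule measurable_compose[OF mo mF])
    also have "\<dots> = (\<integral>\<^sup>+s. \<integral>\<^sup>+e. \<integral>\<^sup>+v. f (Phi W (omap V i j (s, v)) e) \<partial>unif01 \<partial>EE W \<partial>\<nu>)"
    proof (rule nn_integral_cong_AE)
      show "AE s in \<nu>. (\<integral>\<^sup>+v. \<integral>\<^sup>+e. f (Phi W (omap V i j (s, v)) e) \<partial>EE W \<partial>unif01)
          = (\<integral>\<^sup>+e. \<integral>\<^sup>+v. f (Phi W (omap V i j (s, v)) e) \<partial>unif01 \<partial>EE W)"
      proof (rule AE_I2)
        fix s assume "s \<in> space \<nu>"
        then have sW: "s \<in> space (stsp W)" using sets_eq_imp_space_eq[OF snu] by simp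
        show "(\<integral>\<^sup>+v. \<integral>\<^sup>+e. f (Phi W (omap V i j (s, v)) e) \<partial>EE W \<partial>unif01)
          = (\<integral>\<^sup>+e. \<integral>\<^sup>+v. f (Phi W (omap V i j (s, v)) e) \<partial>unif01 \<partial>EE W)"
          using meas_m2[OF _ ij(2) VW sW f, of i] ij(1) VW
          by (intro pair_sigma_finite.Fubini') (auto simp: pair_sigma_finite_def sf_EE[OF W] sf_unif01)
      qed
    qed
    finally have RHS: "(\<integral>\<^sup>+z. f z \<partial>exp_mixture W (op_edge_step V B i j \<nu>))
        = (\<integral>\<^sup>+s. \<integral>\<^sup>+e. \<integral>\<^sup>+v. f (Phi W (omap V i j (s, v)) e) \<partial>unif01 \<partial>EE W \<partial>\<nu>)" .
    have sW_ae: "AE s in \<nu>. s \<in> space (stsp W)"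
      using sets_eq_imp_space_eq[OF snu] by (auto intro!: AE_I2)
    have smuU: "sets (\<mu> \<Otimes>\<^sub>M unif01) = sets (stsp W \<Otimes>\<^sub>M (borel :: real measure))"
      by (rule sets_pair_measure_cong[OF smu]) simp
    have "(\<integral>\<^sup>+z. f z \<partial>kmp_edge_step V B T i j \<mu>) = (\<integral>\<^sup>+s. \<integral>\<^sup>+e. \<integral>\<^sup>+v. f (Phi W (omap V i j (s, v)) e) \<partial>unif01 \<partial>EE W \<partial>\<nu>)"
    proof (cases "j \<in> B")
      case True
      have kb: "kmp_edge_step V B T i j \<mu> = distr ((\<mu> \<Otimes>\<^sub>M unif01) \<Otimes>\<^sub>M exp1) (stsp W) (bmap T i j)"
        using True by (simp add: kmp_edge_step_def bmap_def W_def)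
      have mb: "bmap T i j \<in> measurable ((\<mu> \<Otimes>\<^sub>M unif01) \<Otimes>\<^sub>M exp1) (stsp W)"
        using meas_bmap[OF _ ij(2), of i T] ij(1) VW
        by (simp add: measurable_cong_sets[OF sets_pair_measure_cong[OF smuU sets_exp1] refl] subset_iff)
      have mg: "(\<lambda>p. \<integral>\<^sup>+b. f (bmap T i j (p, b)) \<partial>exp1) \<in> borel_measurable (\<mu> \<Otimes>\<^sub>M unif01)"
        using sigma_finite_measure.borel_measurable_nn_integral[OF sf_exp1, of "\<lambda>p b. f (bmap T i j (p, b))"]
          measurable_compose[OF mb f] by (simp add: split_beta')
      have mg2: "(\<lambda>z. \<integral>\<^sup>+u. \<integral>\<^sup>+b. f (bmap T i j ((z, u), b)) \<partial>exp1 \<partial>unif01) \<in> borel_measurable (stsp W)"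
        using sigma_finite_measure.borel_measurable_nn_integral[OF sf_unif01, of "\<lambda>z u. \<integral>\<^sup>+b. f (bmap T i j ((z, u), b)) \<partial>exp1"]
          mg by (simp add: split_beta' measurable_cong_sets[OF sets_pair_measure_cong[OF smu refl] refl])
      have "(\<integral>\<^sup>+z. f z \<partial>kmp_edge_step V B T i j \<mu>) = (\<integral>\<^sup>+q. f (bmap T i j q) \<partial>((\<mu> \<Otimes>\<^sub>M unif01) \<Otimes>\<^sub>M exp1))"
        unfolding kb by (rule nn_integral_distr[OF mb]) (use f in \<open>simp add: measurable_cong_sets[OF sets_distr refl]\<close>)
      also have "\<dots> = (\<integral>\<^sup>+p. \<integral>\<^sup>+b. f (bmap T i j (p, b)) \<partial>exp1 \<partial>(\<mu> \<Otimes>\<^sub>M unif01))"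
        by (rule sigma_finite_measure.nn_integral_fst[OF sf_exp1, symmetric]) (rule measurable_compose[OF mb f])
      also have "\<dots> = (\<integral>\<^sup>+z. \<integral>\<^sup>+u. \<integral>\<^sup>+b. f (bmap T i j ((z, u), b)) \<partial>exp1 \<partial>unif01 \<partial>\<mu>)"
        by (rule sigma_finite_measure.nn_integral_fst[OF sf_unif01, symmetric, where f="\<lambda>p. \<integral>\<^sup>+b. f (bmap T i j (p, b)) \<partial>exp1", simplified]) (rule mg)
      also have "\<dots> = (\<integral>\<^sup>+s. \<integral>\<^sup>+e. \<integral>\<^sup>+u. \<integral>\<^sup>+b. f (bmap T i j ((Phi W s e, u), b)) \<partial>exp1 \<partial>unif01 \<partial>EE W \<partial>\<nu>)"
        unfolding \<mu>_def by (rule R1[OF W snu mg2])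
      also have "\<dots> = (\<integral>\<^sup>+s. \<integral>\<^sup>+e. \<integral>\<^sup>+v. f (Phi W (omap V i j (s, v)) e) \<partial>unif01 \<partial>EE W \<partial>\<nu>)"
      proof (rule nn_integral_cong_AE)
        show "AE s in \<nu>. (\<integral>\<^sup>+e. \<integral>\<^sup>+u. \<integral>\<^sup>+b. f (bmap T i j ((Phi W s e, u), b)) \<partial>exp1 \<partial>unif01 \<partial>EE W)
           = (\<integral>\<^sup>+e. \<integral>\<^sup>+v. f (Phi W (omap V i j (s, v)) e) \<partial>unif01 \<partial>EE W)"
          using ae sW_ae
        proof eventually_elim
          case (elim s)
          have jV: "j \<notin> V" using True disj by auto
          show ?case
            using elim ij True jV Tpos[OF True] VW
            by (intro edge_bnd[OF W ij(1) ij(2) jV VW _ _ _ _ f]) auto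
        qed
      qed
      finally show ?thesis .
    next
      case False
      have jV: "j \<in> V" using False ij(2) by (auto simp: W_def)
      have kb: "kmp_edge_step V B T i j \<mu> = distr (\<mu> \<Otimes>\<^sub>M unif01) (stsp W) (kmap i j)"
        using False by (simp add: kmp_edge_step_def kmap_def W_def)
      have mb: "kmap i j \<in> measurable (\<mu> \<Otimes>\<^sub>M unif01) (stsp W)"
        using meas_kmap[OF _ ij(2), of i] ij(1) VW
        by (simp add: measurable_cong_sets[OF smuU refl] subset_iff)
      have mg2: "(\<lambda>z. \<integral>\<^sup>+u. f (kmap i j (z, u)) \<partial>unif01) \<in> borel_measurable (stsp W)"
        using sigma_finite_measure.borel_measurable_nn_integral[OF sf_unif01, of "\<lambda>z u. f (kmap i j (z, u))"]
          measurable_compose[OF mb f] by (simp add: split_beta' measurable_cong_sets[OF sets_pair_measure_cong[OF smu refl] refl])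
      have "(\<integral>\<^sup>+z. f z \<partial>kmp_edge_step V B T i j \<mu>) = (\<integral>\<^sup>+q. f (kmap i j q) \<partial>(\<mu> \<Otimes>\<^sub>M unif01))"
        unfolding kb by (rule nn_integral_distr[OF mb]) (use f in \<open>simp add: measurable_cong_sets[OF sets_distr refl]\<close>)
      also have "\<dots> = (\<integral>\<^sup>+z. \<integral>\<^sup>+u. f (kmap i j (z, u)) \<partial>unif01 \<partial>\<mu>)"
        by (rule sigma_finite_measure.nn_integral_fst[OF sf_unif01, symmetric]) (rule measurable_compose[OF mb f])
      also have "\<dots> = (\<integral>\<^sup>+s. \<integral>\<^sup>+e. \<integral>\<^sup>+u. f (kmap i j (Phi W s e, u)) \<partial>unif01 \<partial>EE W \<partial>\<nu>)"
        unfolding \<mu>_def by (rule R1[OF W snu mg2])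
      also have "\<dots> = (\<integral>\<^sup>+s. \<integral>\<^sup>+e. \<integral>\<^sup>+v. f (Phi W (omap V i j (s, v)) e) \<partial>unif01 \<partial>EE W \<partial>\<nu>)"
      proof (rule nn_integral_cong_AE)
        show "AE s in \<nu>. (\<integral>\<^sup>+e. \<integral>\<^sup>+u. f (kmap i j (Phi W s e, u)) \<partial>unif01 \<partial>EE W)
           = (\<integral>\<^sup>+e. \<integral>\<^sup>+v. f (Phi W (omap V i j (s, v)) e) \<partial>unif01 \<partial>EE W)"
          using ae sW_ae
        proof eventually_elim
          case (elim s)
          show ?case
            using elim ij jV VW
            by (intro edge_int[OF W ij(1) jV VW ij(3) _ _ _ f]) auto
        qed
      qed
      finally show ?thesis .
    qed
    then show "(\<integral>\<^sup>+z. f z \<partial>kmp_edge_step V B T i j \<mu>) = (\<integral>\<^sup>+z. f z \<partial>exp_mixture W (op_edge_step V B i j \<nu>))"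
      using RHS by simp
  qed
qed

lemma distr_subprob_any:
  assumes M: "subprob_space M" and N: "space N \<noteq> {}"
  shows "distr M N f \<in> space (subprob_algebra N)"
proof -
  have sp: "space (distr M N f) = space N" by simp
  have "emeasure (distr M N f) (space N) \<le> 1"
  proof -
    have "emeasure (distr M N f) (space N) = (if space N \<in> sigma_sets (space N) (sets N) \<and> measure_space (space N) (sigma_sets (space N) (sets N)) (\<lambda>A. emeasure M (f -` A \<inter> space M))
        then emeasure M (f -` space N \<inter> space M) else 0)"
      unfolding distr_def emeasure_measure_of_conv by simp
    also have "\<dots> \<le> 1"
      using emeasure_space[of M "f -` space N \<inter> space M"] subprob_space.emeasure_space_le_1[OF M]
      by (auto intro: order_trans)
    finally show ?thesis .
  qed
  then have "subprob_space (distr M N f)"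
    using N by (intro subprob_spaceI) auto
  then show ?thesis by (simp add: space_subprob_algebra)
qed

definition admP :: "'v set \<Rightarrow> 'v set \<Rightarrow> ('v \<Rightarrow> real) \<Rightarrow> ('v \<Rightarrow> real) \<Rightarrow> bool" where
  "admP V B T x \<longleftrightarrow> (\<forall>i\<in>V. 0 \<le> x i) \<and> (\<forall>j\<in>B. x j = T j)"

lemma admP_pred:
  assumes "finite V" "finite B"
  shows "Measurable.pred (stsp (V \<union> B)) (admP V B T)"
proof -
  have c: "(\<lambda>x. x l) \<in> borel_measurable (stsp (V \<union> B))" if "l \<in> V \<union> B" for l
    using that unfolding stsp_def by measurable
  have "Measurable.pred (stsp (V \<union> B)) (\<lambda>x. \<forall>i\<in>V. 0 \<le> x i)"
    using assms c by (intro pred_intros_finite) (auto intro!: borel_measurable_le)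
  moreover have "Measurable.pred (stsp (V \<union> B)) (\<lambda>x. \<forall>j\<in>B. x j = T j)"
    using assms c by (intro pred_intros_finite) (auto intro!: pred_eq_const1)
  ultimately show ?thesis unfolding admP_def by (intro pred_intros_logic)
qed

lemma admissible_iff:
  "admissible_param V B T \<nu> \<longleftrightarrow> prob_space \<nu> \<and> sets \<nu> = sets (stsp (V \<union> B)) \<and> (AE s in \<nu>. admP V B T s)"
  by (simp add: admissible_param_def admP_def)

lemma adm_subprob:
  "admissible_param V B T \<nu> \<Longrightarrow> \<nu> \<in> space (subprob_algebra (stsp (V \<union> B)))"
  by (auto simp: admissible_param_def space_subprob_algebra intro: prob_space_imp_subprob_space)

lemma AE_unif01: "AE v in unif01. 0 \<le> v \<and> v \<le> 1"
  unfolding unif01_def by (rule AE_uniform_measureI) auto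

lemma op_edge_adm:
  fixes V B :: "'v set" and Eb :: "('v \<times> 'v) set" and T :: "'v \<Rightarrow> real"
  assumes finV: "finite V" and finB: "finite B" and disj: "V \<inter> B = {}"
    and edges: "Eb \<subseteq> V \<times> (V \<union> B)"
    and Tpos: "\<And>j. j \<in> B \<Longrightarrow> 0 < T j"
    and nu: "admissible_param V B T \<nu>"
    and e: "(i, j) \<in> Eb"
  shows "admissible_param V B T (op_edge_step V B i j \<nu>)"
proof -
  define W where "W = V \<union> B"
  have ij: "i \<in> V" "j \<in> W" using e edges by (auto simp: W_def)
  have VW: "V \<subseteq> W" by (auto simp: W_def)
  have snu: "sets \<nu> = sets (stsp W)" and pnu: "prob_space \<nu>"
    and ae: "AE s in \<nu>. admP V B T s"
    using nu by (auto simp: admissible_iff W_def)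
  have op: "op_edge_step V B i j \<nu> = distr (\<nu> \<Otimes>\<^sub>M unif01) (stsp W) (omap V i j)"
    by (simp add: op_edge_step_def omap_def W_def)
  have mo: "omap V i j \<in> measurable (\<nu> \<Otimes>\<^sub>M unif01) (stsp W)"
    using meas_omap[OF _ ij(2) VW, of i] ij(1) VW
    by (simp add: measurable_cong_sets[OF sets_pair_measure_cong[OF snu sets_unif01] refl] subset_iff)
  have pp: "prob_space (\<nu> \<Otimes>\<^sub>M unif01)" using pnu prob_unif01 by (rule prob_space_pair)
  have ap: "Measurable.pred (stsp W) (admP V B T)" unfolding W_def using finV finB by (rule admP_pred)
  have "AE p in \<nu> \<Otimes>\<^sub>M unif01. admP V B T (omap V i j p)"
  proof (rule pair_sigma_finite.AE_pair_measure)
    show "pair_sigma_finite \<nu> unif01"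
      using pnu sf_unif01 by (simp add: pair_sigma_finite_def prob_space_imp_sigma_finite)
    show "{x \<in> space (\<nu> \<Otimes>\<^sub>M unif01). admP V B T (omap V i j x)} \<in> sets (\<nu> \<Otimes>\<^sub>M unif01)"
      using measurable_compose[OF mo ap] by (simp add: pred_def)
    show "AE s in \<nu>. AE v in unif01. admP V B T (omap V i j (s, v))"
      using ae
    proof eventually_elim
      case (elim s)
      show ?case using AE_unif01
      proof eventually_elim
        case (elim v)
        have si: "0 \<le> s i" using \<open>admP V B T s\<close> ij(1) by (simp add: admP_def)
        have sj: "0 \<le> s j" using \<open>admP V B T s\<close> ij(2) Tpos unfolding admP_def W_def
          by (metis Un_iff less_imp_le)
        have "0 \<le> v * s i + (1 - v) * s j" using si sj elim by (simp add: add_nonneg_nonneg mult_nonneg_nonneg)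
        then show ?case using \<open>admP V B T s\<close> disj by (auto simp: admP_def omap_def)
      qed
    qed
  qed
  then have "AE x in op_edge_step V B i j \<nu>. admP V B T x"
    unfolding op using ap by (subst AE_distr_iff[OF mo]) (auto simp: pred_def)
  moreover have "prob_space (op_edge_step V B i j \<nu>)"
    unfolding op by (rule prob_space.prob_space_distr[OF pp mo])
  ultimately show ?thesis unfolding admissible_iff op W_def by simp
qed

lemma mix_alt_any:
  "finite W \<Longrightarrow> exp_mixture W \<nu> = \<nu> \<bind> (\<lambda>s. distr (EE W) (stsp W) (Phi W s))"
  unfolding exp_mixture_def by (intro bind_cong refl Kexp_distr)

lemma mix_subprob:
  assumes W: "finite W" and nu: "\<nu> \<in> space (subprob_algebra (stsp W))"
  shows "exp_mixture W \<nu> \<in> space (subprob_algebra (stsp W))"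
proof -
  have snu: "sets \<nu> = sets (stsp W)" and sp: "subprob_space \<nu>" using nu by (auto simp: space_subprob_algebra)
  have ne: "space \<nu> \<noteq> {}" using sp subprob_space.subprob_not_empty by blast
  show ?thesis unfolding mix_alt_any[OF W] space_subprob_algebra
    using subprob_space_bind[OF sp Kmeas'[OF W snu]] sets_bind[OF _ ne, of _ "stsp W"] by simp
qed

lemma mix_bind_commute:
  assumes W: "finite W" and F: "\<And>x. F x \<in> space (subprob_algebra (stsp W))"
  shows "exp_mixture W (measure_pmf p \<bind> F) = measure_pmf p \<bind> (\<lambda>x. exp_mixture W (F x))"
  unfolding mix_alt_any[OF W]
  by (rule bind_assoc[OF _ Kmeas[OF W]]) (use F in simp)

lemma bind_adm:
  assumes finV: "finite V" and finB: "finite B"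
    and F: "\<And>x. F x \<in> space (subprob_algebra (stsp (V \<union> B)))"
    and A: "\<And>x. x \<in> set_pmf p \<Longrightarrow> admissible_param V B T (F x)"
  shows "admissible_param V B T (measure_pmf p \<bind> F)"
proof -
  have Fm: "F \<in> measurable (measure_pmf p) (subprob_algebra (stsp (V \<union> B)))" using F by simp
  have "prob_space (measure_pmf p \<bind> F)"
    using A by (intro prob_space.prob_space_bind[OF prob_space_measure_pmf _ Fm] AE_pmfI) (auto simp: admissible_param_def)
  moreover have "sets (measure_pmf p \<bind> F) = sets (stsp (V \<union> B))"
    using F by (intro sets_bind) (auto simp: space_subprob_algebra)
  moreover have "AE s in measure_pmf p \<bind> F. admP V B T s"
    using A by (subst AE_bind[OF Fm admP_pred[OF finV finB]]) (auto intro!: AE_pmfI simp: admissible_iff)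
  ultimately show ?thesis by (simp add: admissible_iff)
qed

lemma kmp_edge_subprob:
  assumes "prob_space \<mu>"
  shows "kmp_edge_step V B T i j \<mu> \<in> space (subprob_algebra (stsp (V \<union> B)))"
proof -
  have p1: "prob_space (\<mu> \<Otimes>\<^sub>M unif01)" using assms prob_unif01 by (rule prob_space_pair)
  have p2: "prob_space ((\<mu> \<Otimes>\<^sub>M unif01) \<Otimes>\<^sub>M exp1)" using p1 prob_exp1 by (rule prob_space_pair)
  show ?thesis unfolding kmp_edge_step_def
    by (cases "j \<in> B") (simp_all only: if_True if_False distr_subprob_any[OF prob_space_imp_subprob_space[OF p1] space_stsp_ne]
      distr_subprob_any[OF prob_space_imp_subprob_space[OF p2] space_stsp_ne])
qed

lemma op_edge_subprob:
  assumes "prob_space \<nu>"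
  shows "op_edge_step V B i j \<nu> \<in> space (subprob_algebra (stsp (V \<union> B)))"
proof -
  have p1: "prob_space (\<nu> \<Otimes>\<^sub>M unif01)" using assms prob_unif01 by (rule prob_space_pair)
  show ?thesis unfolding op_edge_step_def
    by (rule distr_subprob_any[OF prob_space_imp_subprob_space[OF p1] space_stsp_ne])
qed

locale kmpctx =
  fixes V B :: "'v set" and Eb :: "('v \<times> 'v) set" and T :: "'v \<Rightarrow> real"
  assumes finV: "finite V" and finB: "finite B" and disj: "V \<inter> B = {}"
    and edges: "Eb \<subseteq> V \<times> (V \<union> B)"
    and orient: "\<And>i j. (i, j) \<in> Eb \<Longrightarrow> (j, i) \<notin> Eb"
    and Tpos: "\<And>j. j \<in> B \<Longrightarrow> 0 < T j"
begin

lemma finW: "finite (V \<union> B)" using finV finB by simp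

lemma finEb: "finite Eb"
  using edges finV finB by (meson finite_SigmaI finite_Un finite_subset)

lemma op_step_adm:
  assumes ne: "Eb \<noteq> {}" and nu: "admissible_param V B T \<nu>"
  shows "admissible_param V B T (op_step V B Eb \<nu>)"
  unfolding op_step_def
proof (rule bind_adm[OF finV finB])
  have p: "prob_space \<nu>" using nu by (simp add: admissible_param_def)
  show "(case x of (i, j) \<Rightarrow> op_edge_step V B i j \<nu>) \<in> space (subprob_algebra (stsp (V \<union> B)))" for x
    using op_edge_subprob[OF p] by (simp add: split_beta)
  show "admissible_param V B T (case x of (i, j) \<Rightarrow> op_edge_step V B i j \<nu>)" if "x \<in> set_pmf (pmf_of_set Eb)" for x
    using that ne finEb op_edge_adm[OF finV finB disj edges Tpos nu, of "fst x" "snd x"]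
    by (simp add: split_beta)
qed

lemma kmp_step_eq:
  assumes ne: "Eb \<noteq> {}" and nu: "admissible_param V B T \<nu>"
  shows "kmp_step V B Eb T (exp_mixture (V \<union> B) \<nu>) = exp_mixture (V \<union> B) (op_step V B Eb \<nu>)"
proof -
  have p: "prob_space \<nu>" and snu: "sets \<nu> = sets (stsp (V \<union> B))" using nu by (auto simp: admissible_param_def)
  have pm: "prob_space (exp_mixture (V \<union> B) \<nu>)" by (rule prob_exp_mixture[OF finW snu p])
  have "kmp_step V B Eb T (exp_mixture (V \<union> B) \<nu>)
      = measure_pmf (pmf_of_set Eb) \<bind> (\<lambda>x. exp_mixture (V \<union> B) (case x of (i, j) \<Rightarrow> op_edge_step V B i j \<nu>))"
    unfolding kmp_step_def
  proof (rule bind_measure_pmf_cong)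
    show "(case x of (i, j) \<Rightarrow> kmp_edge_step V B T i j (exp_mixture (V \<union> B) \<nu>)) \<in> space (subprob_algebra (stsp (V \<union> B)))" for x
      using kmp_edge_subprob[OF pm] by (simp add: split_beta)
    show "exp_mixture (V \<union> B) (case x of (i, j) \<Rightarrow> op_edge_step V B i j \<nu>) \<in> space (subprob_algebra (stsp (V \<union> B)))" for x
      using mix_subprob[OF finW op_edge_subprob[OF p]] by (simp add: split_beta)
    show "(case x of (i, j) \<Rightarrow> kmp_edge_step V B T i j (exp_mixture (V \<union> B) \<nu>)) = exp_mixture (V \<union> B) (case x of (i, j) \<Rightarrow> op_edge_step V B i j \<nu>)"
      if "x \<in> set_pmf (pmf_of_set Eb)" for x
      using that ne finEb edge_eq[OF finV finB disj edges orient Tpos nu, of "fst x" "snd x"]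
      by (simp add: split_beta)
  qed
  also have "\<dots> = exp_mixture (V \<union> B) (op_step V B Eb \<nu>)"
    unfolding op_step_def
    by (rule mix_bind_commute[OF finW, symmetric]) (use op_edge_subprob[OF p] in \<open>simp add: split_beta\<close>)
  finally show ?thesis .
qed

lemma iter_eq:
  assumes ne: "Eb \<noteq> {}" and nu: "admissible_param V B T \<nu>"
  shows "admissible_param V B T ((op_step V B Eb ^^ n) \<nu>) \<and>
         (kmp_step V B Eb T ^^ n) (exp_mixture (V \<union> B) \<nu>) = exp_mixture (V \<union> B) ((op_step V B Eb ^^ n) \<nu>)"
proof (induction n)
  case 0
  then show ?case using nu by simp
next
  case (Suc n)
  then show ?case using op_step_adm[OF ne] kmp_step_eq[OF ne] by simp
qed

end

context kmpctx
begin

lemma law_eq: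
  assumes t: "0 \<le> t" and nu: "admissible_param V B T \<nu>"
  shows "admissible_param V B T (op_law V B Eb t \<nu>) \<and>
         kmp_law V B Eb T t (exp_mixture (V \<union> B) \<nu>) = exp_mixture (V \<union> B) (op_law V B Eb t \<nu>)"
proof (cases "real (card Eb) * t \<le> 0")
  case True
  then show ?thesis using nu by (simp add: kmp_law_def op_law_def unif_sg_def)
next
  case False
  then have ne: "Eb \<noteq> {}" by auto
  define P where "P = poisson_pmf (real (card Eb) * t)"
  have F: "(op_step V B Eb ^^ n) \<nu> \<in> space (subprob_algebra (stsp (V \<union> B)))" for n
    using iter_eq[OF ne nu, of n] adm_subprob by blast
  have "kmp_law V B Eb T t (exp_mixture (V \<union> B) \<nu>) = measure_pmf P \<bind> (\<lambda>n. (kmp_step V B Eb T ^^ n) (exp_mixture (V \<union> B) \<nu>))"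
    using False by (simp add: kmp_law_def unif_sg_def P_def)
  also have "\<dots> = measure_pmf P \<bind> (\<lambda>n. exp_mixture (V \<union> B) ((op_step V B Eb ^^ n) \<nu>))"
    using iter_eq[OF ne nu] by (intro bind_cong refl) blast
  also have "\<dots> = exp_mixture (V \<union> B) (measure_pmf P \<bind> (\<lambda>n. (op_step V B Eb ^^ n) \<nu>))"
    by (rule mix_bind_commute[OF finW F, symmetric])
  also have "\<dots> = exp_mixture (V \<union> B) (op_law V B Eb t \<nu>)"
    using False by (simp add: op_law_def unif_sg_def P_def)
  finally have eq: "kmp_law V B Eb T t (exp_mixture (V \<union> B) \<nu>) = exp_mixture (V \<union> B) (op_law V B Eb t \<nu>)" .
  have "admissible_param V B T (measure_pmf P \<bind> (\<lambda>n. (op_step V B Eb ^^ n) \<nu>))"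
    using iter_eq[OF ne nu] by (intro bind_adm[OF finV finB F]) blast
  then have "admissible_param V B T (op_law V B Eb t \<nu>)"
    using False by (simp add: op_law_def unif_sg_def P_def)
  with eq show ?thesis by simp
qed

end

lemma moment1:
  assumes c: "0 \<le> c"
  shows "(\<integral>\<^sup>+x. ennreal ((c * pos x) ^ k) \<partial>exp1) = ennreal (fact k * c ^ k)"
proof -
  have "(\<integral>\<^sup>+x. ennreal ((c * pos x) ^ k) \<partial>exp1) = (\<integral>\<^sup>+x. ennreal (exp (-x)) * indicator {0..} x * ennreal ((c * pos x) ^ k) \<partial>lborel)"
    by (rule nn_exp1) measurable
  also have "\<dots> = (\<integral>\<^sup>+x. ennreal (c ^ k) * (ennreal (x ^ k * exp (-x)) * indicator {0..} x) \<partial>lborel)"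
  proof (rule nn_integral_cong)
    fix x :: real
    show "ennreal (exp (-x)) * indicator {0..} x * ennreal ((c * pos x) ^ k) = ennreal (c ^ k) * (ennreal (x ^ k * exp (-x)) * indicator {0..} x)"
    proof (cases "0 \<le> x")
      case True
      then have "ennreal (exp (-x)) * ennreal ((c * pos x) ^ k) = ennreal (c ^ k) * ennreal (x ^ k * exp (-x))"
        using c by (simp add: ennreal_mult[symmetric] power_mult_distrib mult_ac)
      then show ?thesis using True by (simp add: mult_ac)
    qed simp
  qed
  also have "\<dots> = ennreal (c ^ k) * (\<integral>\<^sup>+x. ennreal (x ^ k * exp (-x)) * indicator {0..} x \<partial>lborel)"
    by (rule nn_integral_cmult) measurable
  also have "\<dots> = ennreal (fact k * c ^ k)"
    unfolding nn_intergal_power_times_exp_Ici using c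
    by (simp add: ennreal_mult[symmetric] mult.commute ennreal_of_nat_eq_real_of_nat)
  finally show ?thesis .
qed

context kmpctx
begin

lemma moment:
  assumes nu: "admissible_param V B T \<nu>"
  shows "(\<integral>\<^sup>+z. ennreal (\<Prod>i\<in>V \<union> B. z i ^ k i) \<partial>exp_mixture (V \<union> B) \<nu>)
       = (\<integral>\<^sup>+s. ennreal (\<Prod>i\<in>V \<union> B. fact (k i) * s i ^ k i) \<partial>\<nu>)"
proof -
  define W where "W = V \<union> B"
  have W: "finite W" using finW by (simp add: W_def)
  have snu: "sets \<nu> = sets (stsp W)" and ae: "AE s in \<nu>. admP V B T s"
    using nu by (auto simp: admissible_iff W_def)
  have g: "(\<lambda>z. ennreal (\<Prod>i\<in>W. z i ^ k i)) \<in> borel_measurable (stsp W)"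
  proof -
    have "(\<lambda>z. (\<Prod>i\<in>W. z i ^ k i)) \<in> borel_measurable (stsp W)"
    proof (rule borel_measurable_prod)
      fix i assume "i \<in> W"
      then show "(\<lambda>z. z i ^ k i) \<in> borel_measurable (stsp W)" unfolding stsp_def by measurable
    qed
    then show ?thesis by measurable
  qed
  have inner: "(\<integral>\<^sup>+e. ennreal (\<Prod>i\<in>W. Phi W s e i ^ k i) \<partial>EE W) = (\<Prod>i\<in>W. ennreal (fact (k i) * pos (s i) ^ k i))" for s
  proof -
    have "(\<integral>\<^sup>+e. ennreal (\<Prod>i\<in>W. Phi W s e i ^ k i) \<partial>EE W) = (\<integral>\<^sup>+e. (\<Prod>i\<in>W. ennreal ((pos (s i) * pos (e i)) ^ k i)) \<partial>EE W)"
      by (intro nn_integral_cong) (simp add: Phi_def prod_ennreal pos_def)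
    also have "\<dots> = (\<Prod>i\<in>W. (\<integral>\<^sup>+x. ennreal ((pos (s i) * pos x) ^ k i) \<partial>exp1))"
      unfolding EE_def by (rule product_sigma_finite.product_nn_integral_prod[OF psf_exp1 W]) measurable
    also have "\<dots> = (\<Prod>i\<in>W. ennreal (fact (k i) * pos (s i) ^ k i))"
      by (intro prod.cong refl moment1) (simp add: pos_def)
    finally show ?thesis .
  qed
  have "(\<integral>\<^sup>+z. ennreal (\<Prod>i\<in>W. z i ^ k i) \<partial>exp_mixture W \<nu>) = (\<integral>\<^sup>+s. \<integral>\<^sup>+e. ennreal (\<Prod>i\<in>W. Phi W s e i ^ k i) \<partial>EE W \<partial>\<nu>)"
    by (rule R1[OF W snu g])
  also have "\<dots> = (\<integral>\<^sup>+s. ennreal (\<Prod>i\<in>W. fact (k i) * s i ^ k i) \<partial>\<nu>)"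
    unfolding inner
  proof (rule nn_integral_cong_AE)
    show "AE s in \<nu>. (\<Prod>i\<in>W. ennreal (fact (k i) * pos (s i) ^ k i)) = ennreal (\<Prod>i\<in>W. fact (k i) * s i ^ k i)"
      using ae
    proof eventually_elim
      case (elim s)
      have "0 \<le> s i" if "i \<in> W" for i
        using elim that Tpos unfolding admP_def W_def by (metis Un_iff less_imp_le)
      then show ?case by (simp add: prod_ennreal)
    qed
  qed
  finally show ?thesis unfolding W_def .
qed

end

theorem theorem2p6:
  fixes V B :: "'v set" and Eb :: "('v \<times> 'v) set" and T :: "'v \<Rightarrow> real"
    and \<nu> :: "('v \<Rightarrow> real) measure"
  assumes finV: "finite V" and finB: "finite B" and disj: "V \<inter> B = {}"
    and edges: "Eb \<subseteq> V \<times> (V \<union> B)"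
    and orient: "\<And>i j. (i, j) \<in> Eb \<Longrightarrow> (j, i) \<notin> Eb"
    and Tpos: "\<And>j. j \<in> B \<Longrightarrow> 0 < T j"
    and nu: "admissible_param V B T \<nu>"
  shows
    "(\<forall>t\<ge>0. kmp_law V B Eb T t (exp_mixture (V \<union> B) \<nu>)
              = exp_mixture (V \<union> B) (op_law V B Eb t \<nu>))
     \<and> (\<forall>\<nu>O. (admissible_param V B T \<nu>O \<and> (\<forall>t\<ge>0. op_law V B Eb t \<nu>O = \<nu>O)
              \<and> (\<forall>\<nu>'. admissible_param V B T \<nu>' \<and> (\<forall>t\<ge>0. op_law V B Eb t \<nu>' = \<nu>') \<longrightarrow> \<nu>' = \<nu>O))
           \<longrightarrow> (\<forall>t\<ge>0. kmp_law V B Eb T t (exp_mixture (V \<union> B) \<nu>O) = exp_mixture (V \<union> B) \<nu>O)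
               \<and> (\<forall>k :: 'v \<Rightarrow> nat.
                    (\<integral>\<^sup>+ \<zeta>. ennreal (\<Prod>i\<in>V \<union> B. \<zeta> i ^ k i) \<partial>exp_mixture (V \<union> B) \<nu>O)
                    = (\<integral>\<^sup>+ s. ennreal (\<Prod>i\<in>V \<union> B. fact (k i) * s i ^ k i) \<partial>\<nu>O)))
     \<and> (\<forall>t\<ge>0. \<forall>k :: 'v \<Rightarrow> nat.
          (\<integral>\<^sup>+ \<zeta>. ennreal (\<Prod>i\<in>V \<union> B. \<zeta> i ^ k i) \<partial>kmp_law V B Eb T t (exp_mixture (V \<union> B) \<nu>))
          = (\<integral>\<^sup>+ s. ennreal (\<Prod>i\<in>V \<union> B. fact (k i) * s i ^ k i) \<partial>op_law V B Eb t \<nu>))"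
proof -
  interpret kmpctx V B Eb T
    using finV finB disj edges orient Tpos by unfold_locales auto
  have P1: "\<forall>t\<ge>0. kmp_law V B Eb T t (exp_mixture (V \<union> B) \<nu>) = exp_mixture (V \<union> B) (op_law V B Eb t \<nu>)"
    using law_eq[OF _ nu] by blast
  have P2: "\<forall>\<nu>O. (admissible_param V B T \<nu>O \<and> (\<forall>t\<ge>0. op_law V B Eb t \<nu>O = \<nu>O)
              \<and> (\<forall>\<nu>'. admissible_param V B T \<nu>' \<and> (\<forall>t\<ge>0. op_law V B Eb t \<nu>' = \<nu>') \<longrightarrow> \<nu>' = \<nu>O))
           \<longrightarrow> (\<forall>t\<ge>0. kmp_law V B Eb T t (exp_mixture (V \<union> B) \<nu>O) = exp_mixture (V \<union> B) \<nu>O)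
               \<and> (\<forall>k :: 'v \<Rightarrow> nat.
                    (\<integral>\<^sup>+ \<zeta>. ennreal (\<Prod>i\<in>V \<union> B. \<zeta> i ^ k i) \<partial>exp_mixture (V \<union> B) \<nu>O)
                    = (\<integral>\<^sup>+ s. ennreal (\<Prod>i\<in>V \<union> B. fact (k i) * s i ^ k i) \<partial>\<nu>O))"
  proof (intro allI impI conjI)
    fix \<nu>O :: "('v \<Rightarrow> real) measure"
    assume H: "admissible_param V B T \<nu>O \<and> (\<forall>t\<ge>0. op_law V B Eb t \<nu>O = \<nu>O)
              \<and> (\<forall>\<nu>'. admissible_param V B T \<nu>' \<and> (\<forall>t\<ge>0. op_law V B Eb t \<nu>' = \<nu>') \<longrightarrow> \<nu>' = \<nu>O)"
    then have aO: "admissible_param V B T \<nu>O" and iO: "\<And>t. 0 \<le> t \<Longrightarrow> op_law V B Eb t \<nu>O = \<nu>O" by auto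
    fix t :: real assume t: "0 \<le> t"
    show "kmp_law V B Eb T t (exp_mixture (V \<union> B) \<nu>O) = exp_mixture (V \<union> B) \<nu>O"
      using law_eq[OF t aO] iO[OF t] by simp
  next
    fix \<nu>O :: "('v \<Rightarrow> real) measure" and k :: "'v \<Rightarrow> nat"
    assume H: "admissible_param V B T \<nu>O \<and> (\<forall>t\<ge>0. op_law V B Eb t \<nu>O = \<nu>O)
              \<and> (\<forall>\<nu>'. admissible_param V B T \<nu>' \<and> (\<forall>t\<ge>0. op_law V B Eb t \<nu>' = \<nu>') \<longrightarrow> \<nu>' = \<nu>O)"
    then have aO: "admissible_param V B T \<nu>O" by auto
    show "(\<integral>\<^sup>+ \<zeta>. ennreal (\<Prod>i\<in>V \<union> B. \<zeta> i ^ k i) \<partial>exp_mixture (V \<union> B) \<nu>O)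
                    = (\<integral>\<^sup>+ s. ennreal (\<Prod>i\<in>V \<union> B. fact (k i) * s i ^ k i) \<partial>\<nu>O)"
      by (rule moment[OF aO])
  qed
  have P3: "\<forall>t\<ge>0. \<forall>k :: 'v \<Rightarrow> nat.
          (\<integral>\<^sup>+ \<zeta>. ennreal (\<Prod>i\<in>V \<union> B. \<zeta> i ^ k i) \<partial>kmp_law V B Eb T t (exp_mixture (V \<union> B) \<nu>))
          = (\<integral>\<^sup>+ s. ennreal (\<Prod>i\<in>V \<union> B. fact (k i) * s i ^ k i) \<partial>op_law V B Eb t \<nu>)"
  proof (intro allI impI)
    fix t :: real and k :: "'v \<Rightarrow> nat" assume t: "0 \<le> t"
    show "(\<integral>\<^sup>+ \<zeta>. ennreal (\<Prod>i\<in>V \<union> B. \<zeta> i ^ k i) \<partial>kmp_law V B Eb T t (exp_mixture (V \<union> B) \<nu>))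
          = (\<integral>\<^sup>+ s. ennreal (\<Prod>i\<in>V \<union> B. fact (k i) * s i ^ k i) \<partial>op_law V B Eb t \<nu>)"
      using law_eq[OF t nu] moment[of "op_law V B Eb t \<nu>" k] by simp
  qed
  show ?thesis using P1 P2 P3 by blast
qed

end
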